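(* Let $m,n$ be positive integers with $m\mid n$, let $1\le s\le n/m$, and let $T$ be an $(m+2)$-angulation of the once-punctured polygon $P_n^\bullet$ with exactly $s$ spokes. Then for every integer $k$, among the entries $F_T(i,j)$ with $k\le i\le k+n-1$ and $j\ge i+2$, exactly $\frac nm-s$ are equal to $1$.
   Context: $P_n^\bullet$ is a disc with $n$ boundary marked points $v_0,\ldots,v_{n-1}$ in clockwise order (indices mod $n$) and one interior puncture $\bullet$. Arcs are non-self-intersecting curves with endpoints at marked points, up to isotopy, not isotopic to a boundary segment or contractible; spokes are arcs with an endpoint at $\bullet$. An $(m+2)$-angulation is a set of pairwise non-crossing arcs such that every connected component (subgon) of the complement is an $(m+2)$-gon (sides counted with multiplicity). Let $\lambda_{m+2}=2\cos(\pi/(m+2))$. For $r\in\{0,\ldots,n-1\}$ let $c_r$ be the number of corners of subgons at $v_r$ (a subgon meeting $v_r$ in several corners is counted that many times), and set $a_i=c_{i\bmod n}\lambda_{m+2}$. The infinite frieze pattern $F_T$ is defined on $\{(i,j): j\ge i\}$ by $F_T(i,i)=0$, $F_T(i,i+1)=1$, $F_T(i,j+1)=a_jF_T(i,j)-F_T(i,j-1)$ for $j\ge i+1$. *)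

theory Defs
  imports Complex_Main
begin

text \<open>Combinatorial model of arcs in the once-punctured polygon P_n with marked
points v_0..v_(n-1) (clockwise) and interior puncture.
  Spoke i : the arc from v_i to the puncture.
  Arc i d : the arc starting at v_i such that the side NOT containing the puncture
            contains exactly the d boundary segments v_i v_(i+1), ..., v_(i+d-1) v_(i+d)
            (indices mod n); valid for 2 <= d <= n (d = n: loop at v_i around the puncture).
  Every isotopy class of arcs is represented exactly once.\<close>

datatype parc = Spoke nat | Arc nat nat

fun arc_ok :: "nat \<Rightarrow> parc \<Rightarrow> bool" where
  "arc_ok n (Spoke i) = (i < n)"
| "arc_ok n (Arc i d) = (i < n \<and> 2 \<le> d \<and> d \<le> n)"

text \<open>Lifts to the universal cover (upper half plane over the marked points Z, with
deck transformation x -> x + n, the puncture lifting to the point at infinity).\<close>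

definition lifted_arcs :: "nat \<Rightarrow> parc set \<Rightarrow> (int \<times> int) set" where
  "lifted_arcs n T = {(a, b). \<exists>i d k. Arc i d \<in> T \<and> a = int i + k * int n \<and> b = a + int d}"

definition lifted_spokes :: "nat \<Rightarrow> parc set \<Rightarrow> int set" where
  "lifted_spokes n T = {p. \<exists>i k. Spoke i \<in> T \<and> p = int i + k * int n}"

definition noncrossing :: "nat \<Rightarrow> parc set \<Rightarrow> bool" where
  "noncrossing n T \<longleftrightarrow>
     (\<forall>(a, b) \<in> lifted_arcs n T. \<forall>(c, e) \<in> lifted_arcs n T. \<not> (a < c \<and> c < b \<and> b < e)) \<and>
     (\<forall>(a, b) \<in> lifted_arcs n T. \<forall>p \<in> lifted_spokes n T. \<not> (a < p \<and> p < b))"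

text \<open>Vertex set (in Z) of the subgon lying directly below the lifted arc (a,b).\<close>
definition below_vertices :: "(int \<times> int) set \<Rightarrow> int \<Rightarrow> int \<Rightarrow> int set" where
  "below_vertices L a b = {a, b} \<union>
     {x. a < x \<and> x < b \<and> \<not> (\<exists>(c, e) \<in> L. (c, e) \<noteq> (a, b) \<and> a \<le> c \<and> c < x \<and> x < e \<and> e \<le> b)}"

text \<open>Vertex set (in Z) of the subgon between consecutive lifted spokes p < q;
this subgon has in addition the puncture (point at infinity) as a vertex.\<close>
definition between_vertices :: "(int \<times> int) set \<Rightarrow> int \<Rightarrow> int \<Rightarrow> int set" where
  "between_vertices L p q = {p, q} \<union>
     {x. p < x \<and> x < q \<and> \<not> (\<exists>(c, e) \<in> L. p \<le> c \<and> c < x \<and> x < e \<and> e \<le> q)}"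

definition angulation :: "nat \<Rightarrow> nat \<Rightarrow> parc set \<Rightarrow> bool" where
  "angulation m n T \<longleftrightarrow>
     (\<forall>\<alpha> \<in> T. arc_ok n \<alpha>) \<and> noncrossing n T \<and>
     (\<forall>(a, b) \<in> lifted_arcs n T. card (below_vertices (lifted_arcs n T) a b) = m + 2) \<and>
     (\<forall>p \<in> lifted_spokes n T. \<forall>q \<in> lifted_spokes n T.
        p < q \<and> (\<forall>r \<in> lifted_spokes n T. \<not> (p < r \<and> r < q)) \<longrightarrow>
        card (between_vertices (lifted_arcs n T) p q) + 1 = m + 2) \<and>
     (lifted_spokes n T = {} \<longrightarrow>
        card {x \<in> {0..<int n}. \<not> (\<exists>(c, e) \<in> lifted_arcs n T. c < x \<and> x < e)} = m + 2)"

definition num_spokes :: "parc set \<Rightarrow> nat" where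
  "num_spokes T = card {i. Spoke i \<in> T}"

text \<open>Number of corners of subgons at v_r: the arc ends at v_r (a loop at v_r counted
twice) cut the angle at the boundary point v_r into (number of ends + 1) corners.\<close>
definition corners :: "nat \<Rightarrow> parc set \<Rightarrow> nat \<Rightarrow> nat" where
  "corners n T r = 1 + card {i. Spoke i \<in> T \<and> i = r}
                     + card {(i, d). Arc i d \<in> T \<and> i = r}
                     + card {(i, d). Arc i d \<in> T \<and> (i + d) mod n = r}"

definition lam :: "nat \<Rightarrow> real" where
  "lam m = 2 * cos (pi / real (m + 2))"

definition frieze_a :: "nat \<Rightarrow> nat \<Rightarrow> parc set \<Rightarrow> int \<Rightarrow> real" where
  "frieze_a m n T j = real (corners n T (nat (j mod int n))) * lam m"

text \<open>frieze_aux a i t = F(i, i+t).\<close>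
fun frieze_aux :: "(int \<Rightarrow> real) \<Rightarrow> int \<Rightarrow> nat \<Rightarrow> real" where
  "frieze_aux a i 0 = 0"
| "frieze_aux a i (Suc 0) = 1"
| "frieze_aux a i (Suc (Suc t)) = a (i + int t + 1) * frieze_aux a i (Suc t) - frieze_aux a i t"

definition frieze :: "nat \<Rightarrow> nat \<Rightarrow> parc set \<Rightarrow> int \<Rightarrow> int \<Rightarrow> real" where
  "frieze m n T i j = frieze_aux (frieze_a m n T) i (nat (j - i))"

end

theory Submission
  imports Defs
begin


fun sq :: "real \<Rightarrow> nat \<Rightarrow> real" where
  "sq l 0 = 0" | "sq l (Suc 0) = 1" | "sq l (Suc (Suc k)) = l * sq l (Suc k) - sq l k"

lemma sq_sin_aux:
  assumes "sin t \<noteq> 0"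
  shows "sq (2*cos t) k = sin (real k * t) / sin t \<and> sq (2*cos t) (Suc k) = sin (real (Suc k) * t) / sin t"
proof (induction k)
  case 0
  then show ?case using assms by simp
next
  case (Suc k)
  have id: "sin (real (Suc (Suc k)) * t) = 2 * cos t * sin (real (Suc k) * t) - sin (real k * t)"
  proof -
    define x where "x = real (Suc k) * t"
    have e1: "real (Suc (Suc k)) * t = x + t" unfolding x_def by (simp add: algebra_simps)
    have e2: "real k * t = x - t" unfolding x_def by (simp add: algebra_simps)
    have "sin (x + t) + sin (x - t) = 2 * sin x * cos t" by (simp add: sin_add sin_diff)
    thus ?thesis unfolding e1 e2 x_def[symmetric] by (simp add: algebra_simps)
  qed
  have "sq (2*cos t) (Suc (Suc k)) = 2 * cos t * (sin (real (Suc k) * t) / sin t) - sin (real k * t) / sin t"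
    using Suc by simp
  also have "\<dots> = sin (real (Suc (Suc k)) * t) / sin t" using assms id by (simp add: field_simps)
  finally show ?case using Suc by simp
qed

definition th :: "nat \<Rightarrow> real" where "th m = pi / real (m + 2)"

lemma th_pos: "0 < th m" by (simp add: th_def)
lemma th_mult: "real (m+2) * th m = pi" by (simp add: th_def)
lemma sin_th_pos: "0 < sin (th m)"
proof -
  have "th m < pi" unfolding th_def by (simp add: divide_less_eq pi_gt_zero)
  thus ?thesis using th_pos sin_gt_zero by blast
qed

lemma lam_th: "lam m = 2 * cos (th m)" by (simp add: lam_def th_def)

lemma sq_lam: "sq (lam m) k = sin (real k * th m) / sin (th m)"
  using sq_sin_aux[of "th m" k] sin_th_pos[of m] by (simp add: lam_th)

lemma lam_ge1: "0 < m \<Longrightarrow> 1 \<le> lam m"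
proof -
  assume "0 < m"
  have "real (m+2) \<ge> 3" using \<open>0<m\<close> by simp
  hence "th m \<le> pi/3" unfolding th_def by (intro divide_left_mono) auto
  hence "cos (pi/3) \<le> cos (th m)" using th_pos[of m]
    by (intro cos_monotone_0_pi_le) auto
  thus ?thesis by (simp add: lam_th cos_60)
qed

lemma lam_lt2: "lam m < 2"
proof -
  have "real (m+2) \<ge> 2" by simp
  hence "th m \<le> pi/2" unfolding th_def by (intro divide_left_mono) auto
  have "cos (th m) < cos 0" using th_pos[of m] \<open>th m \<le> pi/2\<close>
    by (intro cos_monotone_0_pi) auto
  thus ?thesis by (simp add: lam_th)
qed

lemma lam_pos: "0 < m \<Longrightarrow> 0 < lam m"
proof -
  assume "0 < m"
  hence "1 \<le> lam m" by (rule lam_ge1)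
  thus ?thesis by linarith
qed

lemma sq_diff: "sin (real k * th m) - sin (th m) = 2 * sin ((real k - 1) * th m / 2) * cos ((real k + 1) * th m / 2)"
  by (simp add: sin_diff_sin algebra_simps)

lemma sq_ge1: assumes "1 \<le> k" "k \<le> m+1" shows "1 \<le> sq (lam m) k"
proof -
  have a: "0 \<le> sin ((real k - 1) * th m / 2)"
  proof (rule sin_ge_zero)
    show "0 \<le> (real k - 1) * th m / 2" using assms th_pos[of m] by simp
    have "(real k - 1) * th m \<le> real (m+2) * th m" using assms th_pos[of m]
      by (intro mult_right_mono) auto
    hence "(real k - 1) * th m \<le> pi" using th_mult[of m] by simp
    thus "(real k - 1) * th m / 2 \<le> pi" using pi_gt_zero by linarith
  qed
  have b: "0 \<le> cos ((real k + 1) * th m / 2)"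
  proof (rule cos_ge_zero)
    have "(real k + 1) * th m \<le> real (m+2) * th m" using assms th_pos[of m]
      by (intro mult_right_mono) auto
    thus "(real k + 1) * th m / 2 \<le> pi/2" using th_mult[of m] by simp
    have "0 \<le> (real k + 1) * th m / 2" using th_pos[of m] by simp
    thus "- (pi / 2) \<le> (real k + 1) * th m / 2" using pi_gt_zero by linarith
  qed
  have "0 \<le> 2 * sin ((real k - 1) * th m / 2) * cos ((real k + 1) * th m / 2)" using a b by simp
  hence "sin (th m) \<le> sin (real k * th m)" using sq_diff[of k m] by linarith
  thus ?thesis unfolding sq_lam using le_divide_eq_1_pos[OF sin_th_pos[of m]] by blast
qed

lemma sq_gt1: assumes "2 \<le> k" "k \<le> m" shows "1 < sq (lam m) k"
proof -
  have a: "0 < sin ((real k - 1) * th m / 2)"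
  proof (rule sin_gt_zero)
    show "0 < (real k - 1) * th m / 2" using assms th_pos[of m] by simp
    have "(real k - 1) * th m < real (m+2) * th m" using assms th_pos[of m]
      by (intro mult_strict_right_mono) auto
    hence "(real k - 1) * th m < pi" using th_mult[of m] by simp
    thus "(real k - 1) * th m / 2 < pi" using pi_gt_zero by linarith
  qed
  have b: "0 < cos ((real k + 1) * th m / 2)"
  proof (rule cos_gt_zero_pi)
    have "(real k + 1) * th m < real (m+2) * th m" using assms th_pos[of m]
      by (intro mult_strict_right_mono) auto
    thus "(real k + 1) * th m / 2 < pi/2" using th_mult[of m] by simp
    have "0 \<le> (real k + 1) * th m / 2" using th_pos[of m] by simp
    thus "- (pi / 2) < (real k + 1) * th m / 2" using pi_gt_zero by linarith
  qed
  have "0 < 2 * sin ((real k - 1) * th m / 2) * cos ((real k + 1) * th m / 2)" using a b by simp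
  hence "sin (th m) < sin (real k * th m)" using sq_diff[of k m] by linarith
  thus ?thesis unfolding sq_lam using less_divide_eq_1_pos[OF sin_th_pos[of m]] by blast
qed

lemma sq_nonneg: assumes "k \<le> m+1" shows "0 \<le> sq (lam m) k"
  using sq_ge1[of k m] assms by (cases k) auto

lemma sq_top: "sq (lam m) (m+1) = 1"
proof -
  have "real (m+1) * th m = pi - th m" using th_mult[of m] by (simp add: algebra_simps)
  thus ?thesis using sin_th_pos[of m] by (simp add: sq_lam)
qed

lemma sq_m: "sq (lam m) m = lam m"
proof -
  have "real m * th m = pi - 2 * th m" using th_mult[of m] by (simp add: algebra_simps)
  hence "sq (lam m) m = sin (2 * th m) / sin (th m)" by (simp add: sq_lam)
  also have "\<dots> = lam m" using sin_th_pos[of m] by (simp add: sin_double lam_th)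
  finally show ?thesis .
qed

lemma sq_m1: assumes "0 < m" shows "sq (lam m) (m - 1) = lam m ^ 2 - 1"
proof -
  obtain m' where m': "m = Suc m'" using assms by (cases m) auto
  have "sq (lam m) (Suc (Suc m')) = lam m * sq (lam m) (Suc m') - sq (lam m) m'" by simp
  hence "1 = lam m * lam m - sq (lam m) (m-1)" using sq_top[of m] sq_m[of m] m' by simp
  thus ?thesis by (simp add: power2_eq_square)
qed

definition det :: "complex \<Rightarrow> complex \<Rightarrow> real" where
  "det z w = Re z * Im w - Im z * Re w"

lemma det_self[simp]: "det z z = 0" by (simp add: det_def)
lemma det_swap: "det w z = - det z w" by (simp add: det_def)
lemma det_add1[simp]: "det (z + u) w = det z w + det u w" by (simp add: det_def algebra_simps)
lemma det_add2[simp]: "det z (w + u) = det z w + det z u" by (simp add: det_def algebra_simps)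
lemma det_diff1[simp]: "det (z - u) w = det z w - det u w" by (simp add: det_def algebra_simps)
lemma det_diff2[simp]: "det z (w - u) = det z w - det z u" by (simp add: det_def algebra_simps)
lemma det_scale1[simp]: "det (of_real a * z) w = a * det z w" by (simp add: det_def algebra_simps)
lemma det_scale2[simp]: "det z (of_real a * w) = a * det z w" by (simp add: det_def algebra_simps)
lemma det_minus1[simp]: "det (- z) w = - det z w" by (simp add: det_def)
lemma det_minus2[simp]: "det z (- w) = - det z w" by (simp add: det_def)

lemma cramer:
  assumes "det p q \<noteq> 0"
  shows "of_real (det p q) * z = of_real (det z q) * p + of_real (det p z) * q"
  by (simp add: det_def complex_eq_iff algebra_simps)

lemma cramer1:
  assumes "det p q = 1"
  shows "z = of_real (det z q) * p + of_real (det p z) * q"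
  using cramer[of p q z] assms by simp

lemma ss_mono: "sorted_wrt (<) zs \<Longrightarrow> i < j \<Longrightarrow> j < length zs \<Longrightarrow> zs!i < zs!j"
  by (rule sorted_wrt_nth_less)

lemma ss_mono_le: "sorted_wrt (<) (zs::int list) \<Longrightarrow> i \<le> j \<Longrightarrow> j < length zs \<Longrightarrow> zs!i \<le> zs!j"
proof -
  assume a: "sorted_wrt (<) zs" "i \<le> j" "j < length zs"
  show ?thesis
  proof (cases "i = j")
    case False
    hence "i < j" using a by simp
    thus ?thesis using ss_mono[OF a(1) _ a(3)] by (simp add: less_imp_le)
  qed simp
qed

lemma ss_mono_iff: "sorted_wrt (<) (zs::int list) \<Longrightarrow> i < length zs \<Longrightarrow> j < length zs \<Longrightarrow> zs!i < zs!j \<longleftrightarrow> i < j"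
proof -
  assume a: "sorted_wrt (<) zs" "i < length zs" "j < length zs"
  show ?thesis
  proof
    assume "zs!i < zs!j"
    show "i < j"
    proof (rule ccontr)
      assume "\<not> i < j"
      hence "zs!j \<le> zs!i" using ss_mono_le[OF a(1) _ a(2)] by simp
      thus False using \<open>zs!i < zs!j\<close> by simp
    qed
  next
    assume "i < j" thus "zs!i < zs!j" using ss_mono[OF a(1) _ a(3)] by simp
  qed
qed

lemma ss_gap: "sorted_wrt (<) (zs::int list) \<Longrightarrow> Suc k < length zs \<Longrightarrow> y \<in> set zs \<Longrightarrow> \<not> (zs!k < y \<and> y < zs!(Suc k))"
proof
  assume a: "sorted_wrt (<) zs" "Suc k < length zs" "y \<in> set zs" "zs!k < y \<and> y < zs!(Suc k)"
  obtain j where j: "j < length zs" "y = zs!j" using a(3) by (auto simp: in_set_conv_nth)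
  have "k < j" using ss_mono_iff[OF a(1), of k j] a j by simp
  moreover have "j < Suc k" using ss_mono_iff[OF a(1), of j "Suc k"] a j by simp
  ultimately show False by simp
qed

lemma ss_locate:
  assumes "sorted_wrt (<) (zs::int list)" "length zs \<ge> 2" "zs!0 \<le> x" "x < zs!(length zs - 1)"
  shows "\<exists>k. Suc k < length zs \<and> zs!k \<le> x \<and> x < zs!(Suc k)"
proof -
  let ?S = "{k. k < length zs \<and> zs!k \<le> x}"
  have fin: "finite ?S" by simp
  have ne: "0 \<in> ?S" using assms by auto
  define k where "k = Max ?S"
  have kS: "k \<in> ?S" using fin ne k_def Max_in by blast
  have kmax: "\<And>j. j \<in> ?S \<Longrightarrow> j \<le> k" using fin k_def by simp
  have "k \<noteq> length zs - 1" using kS assms by auto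
  hence sk: "Suc k < length zs" using kS by auto
  have "\<not> zs!(Suc k) \<le> x" using kmax[of "Suc k"] sk by auto
  thus ?thesis using sk kS by auto
qed

lemma ss_locate2:
  assumes "sorted_wrt (<) (zs::int list)" "length zs \<ge> 2" "zs!0 < y" "y \<le> zs!(length zs - 1)"
  shows "\<exists>l. 0 < l \<and> l < length zs \<and> zs!(l-1) < y \<and> y \<le> zs!l"
proof -
  let ?S = "{k. k < length zs \<and> y \<le> zs!k}"
  have fin: "finite ?S" by simp
  have ne: "length zs - 1 \<in> ?S" using assms by auto
  define l where "l = Min ?S"
  have lS: "l \<in> ?S" using fin ne l_def Min_in by blast
  have lmin: "\<And>j. j \<in> ?S \<Longrightarrow> l \<le> j" using fin l_def by simp
  have "l \<noteq> 0"
  proof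
    assume "l = 0" thus False using lS assms by simp
  qed
  have "\<not> y \<le> zs!(l-1)" using lmin[of "l-1"] lS \<open>l\<noteq>0\<close> by fastforce
  hence "zs!(l-1) < y" by simp
  moreover have "0 < l" using \<open>l \<noteq> 0\<close> by simp
  ultimately show ?thesis using lS by blast
qed

lemma chain_formula:
  assumes rec: "\<And>k. 0 < k \<Longrightarrow> Suc k < N \<Longrightarrow> w (k-1) + w (Suc k) = of_real l * w k"
  shows "\<And>k. 1 \<le> k \<Longrightarrow> k < N \<Longrightarrow> w k = of_real (sq l k) * w 1 - of_real (sq l (k-1)) * w 0"
proof -
  have "\<forall>k. Suc k < N \<longrightarrow> w (Suc k) = of_real (sq l (Suc k)) * w 1 - of_real (sq l k) * w 0
         \<and> (Suc (Suc k) < N \<longrightarrow> w (Suc (Suc k)) = of_real (sq l (Suc (Suc k))) * w 1 - of_real (sq l (Suc k)) * w 0)"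
  proof
    fix k show "Suc k < N \<longrightarrow> w (Suc k) = of_real (sq l (Suc k)) * w 1 - of_real (sq l k) * w 0
         \<and> (Suc (Suc k) < N \<longrightarrow> w (Suc (Suc k)) = of_real (sq l (Suc (Suc k))) * w 1 - of_real (sq l (Suc k)) * w 0)"
    proof (induction k)
      case 0
      have "Suc (Suc 0) < N \<Longrightarrow> w (Suc (Suc 0)) = of_real l * w 1 - w 0" using rec[of 1] by (simp add: algebra_simps)
      then show ?case by (simp add: numeral_2_eq_2)
    next
      case (Suc k)
      show ?case
      proof (intro impI conjI)
        assume "Suc (Suc k) < N" thus "w (Suc (Suc k)) = of_real (sq l (Suc (Suc k))) * w 1 - of_real (sq l (Suc k)) * w 0"
          using Suc by simp
      next
        assume a: "Suc (Suc (Suc k)) < N"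
        have e1: "w (Suc (Suc k)) = of_real (sq l (Suc (Suc k))) * w 1 - of_real (sq l (Suc k)) * w 0"
          using Suc a by simp
        have e0: "w (Suc k) = of_real (sq l (Suc k)) * w 1 - of_real (sq l k) * w 0"
          using Suc a by simp
        have r: "w (Suc k) + w (Suc (Suc (Suc k))) = of_real l * w (Suc (Suc k))"
          using rec[of "Suc (Suc k)"] a by simp
        have "w (Suc (Suc (Suc k))) = of_real l * w (Suc (Suc k)) - w (Suc k)" using r by (simp add: algebra_simps)
        also have "\<dots> = of_real (sq l (Suc (Suc (Suc k)))) * w 1 - of_real (sq l (Suc (Suc k))) * w 0"
          unfolding e1 e0 by (simp add: algebra_simps)
        finally show "w (Suc (Suc (Suc k))) = of_real (sq l (Suc (Suc (Suc k)))) * w 1 - of_real (sq l (Suc (Suc k))) * w 0" .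
      qed
    qed
  qed
  thus "\<And>k. 1 \<le> k \<Longrightarrow> k < N \<Longrightarrow> w k = of_real (sq l k) * w 1 - of_real (sq l (k-1)) * w 0"
    by (metis Suc_diff_1 less_le_trans zero_less_one)
qed

lemma chain_det:
  assumes rec: "\<And>k. 0 < k \<Longrightarrow> Suc k < N \<Longrightarrow> w (k-1) + w (Suc k) = of_real l * w k"
    and d01: "det (w 0) (w 1) = 1" and N: "2 \<le> N"
  shows "\<And>i j. i \<le> j \<Longrightarrow> j < N \<Longrightarrow> det (w i) (w j) = sq l (j - i)"
proof -
  have cons: "\<And>k. Suc k < N \<Longrightarrow> det (w k) (w (Suc k)) = 1"
  proof -
    fix k show "Suc k < N \<Longrightarrow> det (w k) (w (Suc k)) = 1"
    proof (induction k)
      case 0 then show ?case using d01 by simp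
    next
      case (Suc k)
      have "w (Suc (Suc k)) = of_real l * w (Suc k) - w k" using rec[of "Suc k"] Suc.prems
        by (simp add: algebra_simps)
      hence "det (w (Suc k)) (w (Suc (Suc k))) = - det (w (Suc k)) (w k)"
        by simp
      also have "\<dots> = det (w k) (w (Suc k))" using det_swap[of "w (Suc k)" "w k"] by simp
      finally have "det (w (Suc k)) (w (Suc (Suc k))) = det (w k) (w (Suc k))" .
      then show ?case using Suc by simp
    qed
  qed
  have main: "\<And>i t. i + t < N \<Longrightarrow> det (w i) (w (i + t)) = sq l t \<and> (i + Suc t < N \<longrightarrow> det (w i) (w (i + Suc t)) = sq l (Suc t))"
  proof -
    fix i t show "i + t < N \<Longrightarrow> det (w i) (w (i + t)) = sq l t \<and> (i + Suc t < N \<longrightarrow> det (w i) (w (i + Suc t)) = sq l (Suc t))"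
    proof (induction t)
      case 0 then show ?case using cons[of i] by simp
    next
      case (Suc t)
      show ?case
      proof (intro conjI impI)
        show "det (w i) (w (i + Suc t)) = sq l (Suc t)" using Suc by simp
      next
        assume a: "i + Suc (Suc t) < N"
        have "w (i + Suc (Suc t)) = of_real l * w (i + Suc t) - w (i + t)"
          using rec[of "i + Suc t"] a by (simp add: algebra_simps)
        hence "det (w i) (w (i + Suc (Suc t))) = l * det (w i) (w (i + Suc t)) - det (w i) (w (i + t))"
          by simp
        thus "det (w i) (w (i + Suc (Suc t))) = sq l (Suc (Suc t))" using Suc a by simp
      qed
    qed
  qed
  fix i j assume "i \<le> j" "j < N"
  thus "det (w i) (w j) = sq l (j - i)" using main[of i "j - i"] by simp
qed


definition cnt :: "(int \<times> int) set \<Rightarrow> int set \<Rightarrow> int \<Rightarrow> nat" where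
  "cnt L P x = 1 + (if x \<in> P then 1 else 0) + card {b. (x,b) \<in> L} + card {a. (a,x) \<in> L}"

definition vis :: "(int \<times> int) set \<Rightarrow> int \<Rightarrow> int \<Rightarrow> int set" where
  "vis X a b = {a, b} \<union> {x. a < x \<and> x < b \<and> \<not> (\<exists>(c, e) \<in> X. a \<le> c \<and> c < x \<and> x < e \<and> e \<le> b)}"

lemma below_vis: "below_vertices L a b = vis (L - {(a,b)}) a b"
  unfolding below_vertices_def vis_def by fast

lemma between_vis: "between_vertices L p q = vis L p q"
  unfolding between_vertices_def vis_def by simp

lemma vis_H1:
  assumes "x \<in> vis X a b" "(c,e) \<in> X" "a \<le> c" "e \<le> b" "c < x" "x < e"
  shows False
proof -
  have "x \<noteq> a" using assms by auto
  moreover have "x \<noteq> b" using assms by auto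
  ultimately have "a < x \<and> x < b \<and> \<not> (\<exists>(c, e) \<in> X. a \<le> c \<and> c < x \<and> x < e \<and> e \<le> b)"
    using assms(1) unfolding vis_def by blast
  thus False using assms by blast
qed

lemma vis_sub: "a \<le> b \<Longrightarrow> vis X a b \<subseteq> {a..b}"
  unfolding vis_def by auto

lemma vis_fin: "finite (vis X a b)"
proof -
  have "vis X a b \<subseteq> {a,b} \<union> {a<..<b}" unfolding vis_def by auto
  thus ?thesis by (rule finite_subset) simp
qed

lemma vis_a: "a \<in> vis X a b" and vis_b: "b \<in> vis X a b"
  unfolding vis_def by auto

lemma vis_cons:
  assumes nc: "\<And>a b c e. (a,b) \<in> X \<Longrightarrow> (c,e) \<in> X \<Longrightarrow> \<not>(a < c \<and> c < b \<and> b < e)"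
  and V: "x \<in> vis X a b" "y \<in> vis X a b" "x < y" "\<And>z. z \<in> vis X a b \<Longrightarrow> \<not>(x < z \<and> z < y)"
  and ab: "a \<le> b"
  shows "y = x + 1 \<or> (x,y) \<in> X"
proof (rule ccontr)
  assume H: "\<not> (y = x+1 \<or> (x,y) \<in> X)"
  have "x \<in> {a..b}" "y \<in> {a..b}" using vis_sub[OF ab] V(1,2) by blast+
  hence xa: "a \<le> x" and yb: "y \<le> b" by simp_all
  have xy1: "x+1 < y" using H V(3) by auto
  have "x+1 \<notin> vis X a b" using V(4)[of "x+1"] xy1 by auto
  then obtain c e where ce: "(c,e) \<in> X" "a \<le> c" "c < x+1" "x+1 < e" "e \<le> b"
    unfolding vis_def using xa yb xy1 by auto
  have K: "\<And>c' e'. (c',e') \<in> X \<Longrightarrow> a \<le> c' \<Longrightarrow> e' \<le> b \<Longrightarrow> c' \<le> x \<Longrightarrow> x < e' \<Longrightarrow> c' = x \<and> e' \<le> y"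
  proof -
    fix c' e' assume h: "(c',e') \<in> X" "a \<le> c'" "e' \<le> b" "c' \<le> x" "x < e'"
    have "\<not> c' < x" using vis_H1[OF V(1) h(1) h(2) h(3)] h(5) by auto
    hence "c' = x" using h(4) by simp
    moreover have "\<not> y < e'" using vis_H1[OF V(2) h(1) h(2) h(3)] h(4) V(3) by auto
    ultimately show "c' = x \<and> e' \<le> y" by simp
  qed
  define E where "E = {e'. (x,e') \<in> X \<and> x < e' \<and> e' \<le> y}"
  have eE: "e \<in> E" using K[OF ce(1) ce(2) ce(5)] ce unfolding E_def by auto
  have finE: "finite E" unfolding E_def by (rule finite_subset[of _ "{x<..y}"]) auto
  define e0 where "e0 = Max E"
  have e0E: "e0 \<in> E" using eE finE e0_def Max_in by blast
  have e0max: "\<And>z. z \<in> E \<Longrightarrow> z \<le> e0" using finE e0_def by simp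
  have "e0 \<noteq> y" using H e0E unfolding E_def by auto
  hence e0y: "e0 < y" and xe0: "x < e0" and xe0X: "(x,e0) \<in> X" using e0E unfolding E_def by auto
  have "e0 \<notin> vis X a b" using V(4)[of e0] e0y xe0 by auto
  then obtain c' e' where ce': "(c',e') \<in> X" "a \<le> c'" "c' < e0" "e0 < e'" "e' \<le> b"
    unfolding vis_def using xa yb e0y xe0 by auto
  have "\<not> x < c'" using nc[OF xe0X ce'(1)] ce' by auto
  hence "c' = x \<and> e' \<le> y" using K[OF ce'(1) ce'(2) ce'(5)] ce' xe0 by auto
  hence "e' \<in> E" using ce' xe0 unfolding E_def by auto
  thus False using e0max ce'(4) by fastforce
qed

lemma region_list:
  assumes "V \<subseteq> {a..(b::int)}" "a \<in> V" "b \<in> V" "finite V" "zs = sorted_list_of_set V"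
  shows "sorted_wrt (<) zs" "set zs = V" "length zs = card V" "zs!0 = a" "zs!(card V - 1) = b"
proof -
  show ss: "sorted_wrt (<) zs" unfolding assms(5) by simp
  show st: "set zs = V" unfolding assms(5) using assms(4) by simp
  show ln: "length zs = card V" unfolding assms(5) by simp
  have cp: "0 < card V" using assms(2,4) card_gt_0_iff by blast
  have ne: "0 < length zs" using ln cp by simp
  have z0: "zs!0 \<in> V" using st ne nth_mem by blast
  have "a \<in> set zs" using st assms(2) by simp
  then obtain j where j: "j < length zs" "zs!j = a" unfolding in_set_conv_nth by blast
  have "zs!0 \<le> zs!j" using ss_mono_le[OF ss _ j(1)] by simp
  moreover have "a \<le> zs!0" using z0 assms(1) by auto
  ultimately show "zs!0 = a" using j by simp
  have lt: "card V - 1 < length zs" using ln cp by simp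
  have zl: "zs!(card V - 1) \<in> V" using st lt nth_mem by blast
  have "b \<in> set zs" using st assms(3) by simp
  then obtain i where i: "i < length zs" "zs!i = b" unfolding in_set_conv_nth by blast
  have "i \<le> card V - 1" using i(1) ln by simp
  hence "zs!i \<le> zs!(card V - 1)" using ss_mono_le[OF ss _ lt] by simp
  moreover have "zs!(card V - 1) \<le> b" using zl assms(1) by auto
  ultimately show "zs!(card V - 1) = b" using i by simp
qed

locale frz =
  fixes m n :: nat and L :: "(int \<times> int) set" and P :: "int set" and v :: "int \<Rightarrow> complex"
  assumes m_pos: "0 < m" and n_pos: "0 < n"
  and L_len: "(a,b) \<in> L \<Longrightarrow> a + 2 \<le> b \<and> b \<le> a + int n"
  and P_per: "p \<in> P \<Longrightarrow> p + k * int n \<in> P"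
  and P_ne: "P \<noteq> {}"
  and nc1: "(a,b) \<in> L \<Longrightarrow> (c,e) \<in> L \<Longrightarrow> \<not>(a < c \<and> c < b \<and> b < e)"
  and nc2: "(a,b) \<in> L \<Longrightarrow> p \<in> P \<Longrightarrow> \<not>(a < p \<and> p < b)"
  and card_arc: "(a,b) \<in> L \<Longrightarrow> card (vis (L - {(a,b)}) a b) = m + 2"
  and card_sp: "p \<in> P \<Longrightarrow> q \<in> P \<Longrightarrow> p < q \<Longrightarrow> (\<forall>r\<in>P. \<not>(p < r \<and> r < q)) \<Longrightarrow> card (vis L p q) = m + 1"
  and v_rec: "v (x+1) + v (x-1) = of_real (real (cnt L P x) * lam m) * v x"
  and v_det: "det (v x) (v (x+1)) = 1"
begin

abbreviation "lm \<equiv> lam m"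

definition D :: "int \<Rightarrow> int \<Rightarrow> real" where "D x y = det (v x) (v y)"

definition consec :: "int \<Rightarrow> int \<Rightarrow> bool" where
  "consec p q \<longleftrightarrow> p \<in> P \<and> q \<in> P \<and> p < q \<and> (\<forall>r\<in>P. \<not>(p < r \<and> r < q))"

definition VA where "VA a b = vis (L - {(a,b)}) a b"
definition zsA where "zsA a b = sorted_list_of_set (VA a b)"
definition VS where "VS p q = vis L p q"
definition zsS where "zsS p q = sorted_list_of_set (VS p q)"

definition regl :: "int list \<Rightarrow> bool" where
  "regl zs \<longleftrightarrow> (\<forall>k. 0 < k \<longrightarrow> Suc k < length zs \<longrightarrow> v (zs!(k-1)) + v (zs!(Suc k)) = of_real lm * v (zs!k))"

definition good :: "int \<Rightarrow> int \<Rightarrow> bool" where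
  "good a b \<longleftrightarrow> D a b = 1 \<and> v (zsA a b ! 1) - v b = of_real lm * v a
      \<and> v (zsA a b ! m) - v a = of_real lm * v b \<and> regl (zsA a b)"

lemma D_adj: "D x (x+1) = 1" unfolding D_def using v_det by simp

lemma L_lt: "(a,b) \<in> L \<Longrightarrow> a < b"
proof -
  assume "(a,b) \<in> L"
  hence "a + 2 \<le> b" using L_len by blast
  thus "a < b" by simp
qed

lemma zsA_facts:
  assumes "(a,b) \<in> L"
  shows "sorted_wrt (<) (zsA a b)" "set (zsA a b) = VA a b" "length (zsA a b) = m + 2"
        "zsA a b ! 0 = a" "zsA a b ! (m+1) = b"
proof -
  have ab: "a \<le> b" using L_lt[OF assms] by simp
  have sub: "VA a b \<subseteq> {a..b}" unfolding VA_def by (rule vis_sub[OF ab])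
  have va: "a \<in> VA a b" "b \<in> VA a b" "finite (VA a b)" unfolding VA_def by (rule vis_a, rule vis_b, rule vis_fin)
  note R = region_list[OF sub va zsA_def]
  have c: "card (VA a b) = m + 2" using card_arc[OF assms] unfolding VA_def .
  show "sorted_wrt (<) (zsA a b)" "set (zsA a b) = VA a b" "length (zsA a b) = m + 2"
        "zsA a b ! 0 = a" "zsA a b ! (m+1) = b" using R c by auto
qed

lemma zsS_facts:
  assumes "consec p q"
  shows "sorted_wrt (<) (zsS p q)" "set (zsS p q) = VS p q" "length (zsS p q) = m + 1"
        "zsS p q ! 0 = p" "zsS p q ! m = q"
proof -
  have ab: "p \<le> q" using assms unfolding consec_def by simp
  have sub: "VS p q \<subseteq> {p..q}" unfolding VS_def by (rule vis_sub[OF ab])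
  have va: "p \<in> VS p q" "q \<in> VS p q" "finite (VS p q)" unfolding VS_def by (rule vis_a, rule vis_b, rule vis_fin)
  note R = region_list[OF sub va zsS_def]
  have c: "card (VS p q) = m + 1" using card_sp assms unfolding VS_def consec_def by blast
  show "sorted_wrt (<) (zsS p q)" "set (zsS p q) = VS p q" "length (zsS p q) = m + 1"
        "zsS p q ! 0 = p" "zsS p q ! m = q" using R c by auto
qed

lemma consA:
  assumes "(a,b) \<in> L" "Suc k < m + 2"
  shows "zsA a b ! Suc k = zsA a b ! k + 1 \<or> ((zsA a b ! k, zsA a b ! Suc k) \<in> L \<and> (zsA a b ! k, zsA a b ! Suc k) \<noteq> (a,b))"
proof -
  note F = zsA_facts[OF assms(1)]
  have ab: "a \<le> b" using L_lt[OF assms(1)] by simp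
  have "zsA a b ! Suc k = zsA a b ! k + 1 \<or> (zsA a b ! k, zsA a b ! Suc k) \<in> L - {(a,b)}"
  proof (rule vis_cons[OF _ _ _ _ _ ab])
    show "\<And>a' b' c e. (a', b') \<in> L - {(a,b)} \<Longrightarrow> (c, e) \<in> L - {(a,b)} \<Longrightarrow> \<not> (a' < c \<and> c < b' \<and> b' < e)"
      using nc1 by blast
    have "zsA a b ! k \<in> set (zsA a b)" using F(3) assms(2) by (intro nth_mem) simp
    thus "zsA a b ! k \<in> vis (L - {(a, b)}) a b" using F(2) unfolding VA_def by simp
    have "zsA a b ! Suc k \<in> set (zsA a b)" using F(3) assms(2) by (intro nth_mem) simp
    thus "zsA a b ! Suc k \<in> vis (L - {(a, b)}) a b" using F(2) unfolding VA_def by simp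
    show "zsA a b ! k < zsA a b ! Suc k" using ss_mono[OF F(1)] F(3) assms(2) by simp
    show "\<And>z. z \<in> vis (L - {(a, b)}) a b \<Longrightarrow> \<not> (zsA a b ! k < z \<and> z < zsA a b ! Suc k)"
      using ss_gap[OF F(1)] F(2,3) assms(2) unfolding VA_def by simp
  qed
  thus ?thesis by auto
qed

lemma consS:
  assumes "consec p q" "Suc k < m + 1"
  shows "zsS p q ! Suc k = zsS p q ! k + 1 \<or> (zsS p q ! k, zsS p q ! Suc k) \<in> L"
proof -
  note F = zsS_facts[OF assms(1)]
  have ab: "p \<le> q" using assms(1) unfolding consec_def by simp
  show ?thesis
  proof (rule vis_cons[OF _ _ _ _ _ ab])
    show "\<And>a b c e. (a, b) \<in> L \<Longrightarrow> (c, e) \<in> L \<Longrightarrow> \<not> (a < c \<and> c < b \<and> b < e)"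
      using nc1 by blast
    have "zsS p q ! k \<in> set (zsS p q)" using F(3) assms(2) by (intro nth_mem) simp
    thus "zsS p q ! k \<in> vis L p q" using F(2) unfolding VS_def by simp
    have "zsS p q ! Suc k \<in> set (zsS p q)" using F(3) assms(2) by (intro nth_mem) simp
    thus "zsS p q ! Suc k \<in> vis L p q" using F(2) unfolding VS_def by simp
    show "zsS p q ! k < zsS p q ! Suc k" using ss_mono[OF F(1)] F(3) assms(2) by simp
    show "\<And>z. z \<in> vis L p q \<Longrightarrow> \<not> (zsS p q ! k < z \<and> z < zsS p q ! Suc k)"
      using ss_gap[OF F(1)] F(2,3) assms(2) unfolding VS_def by simp
  qed
qed

lemma finR: "finite {b. (x,b) \<in> L}"
  by (rule finite_subset[of _ "{x..x + int n}"]) (auto dest: L_len)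

lemma finL: "finite {a. (a,x) \<in> L}"
  by (rule finite_subset[of _ "{x - int n..x}"]) (auto dest: L_len)

lemma spoke_window: "\<exists>p\<in>P. x - int n < p \<and> p \<le> x"
proof -
  obtain p0 where p0: "p0 \<in> P" using P_ne by blast
  define k where "k = (x - p0) div int n"
  have np: "0 < int n" using n_pos by simp
  have e: "k * int n + (x - p0) mod int n = x - p0" unfolding k_def by (rule div_mult_mod_eq)
  have "0 \<le> (x - p0) mod int n" "(x - p0) mod int n < int n" using np by simp_all
  hence "x - int n < p0 + k * int n" "p0 + k * int n \<le> x" using e by linarith+
  thus ?thesis using P_per[OF p0, of k] by blast
qed

lemma spoke_le: "\<exists>p\<in>P. p \<le> x \<and> (\<forall>r\<in>P. r \<le> x \<longrightarrow> r \<le> p)"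
proof -
  obtain p1 where p1: "p1 \<in> P" "x - int n < p1" "p1 \<le> x" using spoke_window by blast
  let ?S = "{p\<in>P. x - int n < p \<and> p \<le> x}"
  have fin: "finite ?S" by (rule finite_subset[of _ "{x - int n<..x}"]) auto
  have p1S: "p1 \<in> ?S" using p1 by simp
  define p where "p = Max ?S"
  have pS: "p \<in> ?S" using fin p1S p_def Max_in by blast
  have pmax: "\<And>r. r \<in> ?S \<Longrightarrow> r \<le> p" using fin p_def by simp
  have "\<forall>r\<in>P. r \<le> x \<longrightarrow> r \<le> p"
  proof (intro ballI impI)
    fix r assume "r \<in> P" "r \<le> x"
    show "r \<le> p"
    proof (cases "x - int n < r")
      case True thus ?thesis using pmax \<open>r \<in> P\<close> \<open>r \<le> x\<close> by simp
    next
      case False thus ?thesis using pmax[OF p1S] p1 by simp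
    qed
  qed
  thus ?thesis using pS by blast
qed

lemma spoke_ge: "\<exists>q\<in>P. x \<le> q \<and> (\<forall>r\<in>P. x \<le> r \<longrightarrow> q \<le> r)"
proof -
  obtain p1 where p1: "p1 \<in> P" "x - int n < p1" "p1 \<le> x" using spoke_window by blast
  have q1: "p1 + 1 * int n \<in> P" using P_per[OF p1(1)] .
  let ?S = "{q\<in>P. x \<le> q \<and> q \<le> x + int n}"
  have fin: "finite ?S" by (rule finite_subset[of _ "{x..x + int n}"]) auto
  have q1S: "p1 + int n \<in> ?S" using p1 q1 by simp
  define q where "q = Min ?S"
  have qS: "q \<in> ?S" using fin q1S q_def Min_in by blast
  have qmin: "\<And>r. r \<in> ?S \<Longrightarrow> q \<le> r" using fin q_def by simp
  have "\<forall>r\<in>P. x \<le> r \<longrightarrow> q \<le> r"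
  proof (intro ballI impI)
    fix r assume "r \<in> P" "x \<le> r"
    show "q \<le> r"
    proof (cases "r \<le> x + int n")
      case True thus ?thesis using qmin \<open>r \<in> P\<close> \<open>x \<le> r\<close> by simp
    next
      case False thus ?thesis using qmin[OF q1S] p1 by simp
    qed
  qed
  thus ?thesis using qS by blast
qed

end


context frz begin

lemma good_D: "good a b \<Longrightarrow> D a b = 1" unfolding good_def by simp

lemma arc_right_bound:
  assumes ab: "(a,b) \<in> L" and k: "0 < k" "Suc k < m + 2" and xr: "(zsA a b ! k, r) \<in> L"
  shows "r \<le> zsA a b ! Suc k"
proof (rule ccontr)
  assume H: "\<not> r \<le> zsA a b ! Suc k"
  note F = zsA_facts[OF ab]
  let ?x = "zsA a b ! k" and ?w = "zsA a b ! Suc k"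
  have ax: "a < ?x" using ss_mono[OF F(1), of 0 k] F k by simp
  have xb: "?x < b" using ss_mono[OF F(1), of k "m+1"] F k by simp
  have wb: "?w \<le> b" using ss_mono_le[OF F(1), of "Suc k" "m+1"] F k by simp
  have xw: "?x < ?w" using ss_mono[OF F(1), of k "Suc k"] F k by simp
  have rb: "r \<le> b"
  proof (rule ccontr)
    assume "\<not> r \<le> b"
    thus False using nc1[OF ab xr] ax xb by simp
  qed
  have ne: "(?x, r) \<noteq> (a,b)" using ax by simp
  have wV: "?w \<in> vis (L - {(a,b)}) a b"
  proof -
    have "?w \<in> set (zsA a b)" using F(3) k by (intro nth_mem) simp
    thus ?thesis using F(2) unfolding VA_def by simp
  qed
  show False using vis_H1[OF wV, of ?x r] xr ne ax rb xw H by simp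
qed

lemma arc_left_bound:
  assumes ab: "(a,b) \<in> L" and k: "0 < k" "Suc k < m + 2" and xr: "(r, zsA a b ! k) \<in> L"
  shows "zsA a b ! (k - 1) \<le> r"
proof (rule ccontr)
  assume H: "\<not> zsA a b ! (k-1) \<le> r"
  note F = zsA_facts[OF ab]
  let ?x = "zsA a b ! k" and ?u = "zsA a b ! (k-1)"
  have ax: "a < ?x" using ss_mono[OF F(1), of 0 k] F k by simp
  have xb: "?x < b" using ss_mono[OF F(1), of k "m+1"] F k by simp
  have au: "a \<le> ?u" using ss_mono_le[OF F(1), of 0 "k-1"] F k by simp
  have ux: "?u < ?x" using ss_mono[OF F(1), of "k-1" k] F k by simp
  have ar: "a \<le> r"
  proof (rule ccontr)
    assume "\<not> a \<le> r"
    thus False using nc1[OF xr ab] ax xb by simp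
  qed
  have ne: "(r, ?x) \<noteq> (a,b)" using xb by simp
  have uV: "?u \<in> vis (L - {(a,b)}) a b"
  proof -
    have "?u \<in> set (zsA a b)" using F(3) k by (intro nth_mem) simp
    thus ?thesis using F(2) unfolding VA_def by simp
  qed
  show False using vis_H1[OF uV, of r ?x] xr ne ar xb ux H by simp
qed

lemma fanR:
  assumes "(x,r) \<in> L" "\<forall>r'. (x,r') \<in> L \<and> r' \<le> r \<longrightarrow> good x r'"
  shows "v (x+1) - v r = of_real (real (card {r'. (x,r') \<in> L \<and> r' \<le> r}) * lm) * v x"
  using assms
proof (induction "nat (r - x)" arbitrary: r rule: less_induct)
  case less
  note xr = less.prems(1)
  note F = zsA_facts[OF xr]
  let ?z = "zsA x r ! 1"
  have c0: "?z = x + 1 \<or> ((x, ?z) \<in> L \<and> (x, ?z) \<noteq> (x, r))"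
    using consA[OF xr, of 0] F m_pos by simp
  have zr: "?z < r" using ss_mono[OF F(1), of 1 "m+1"] F m_pos by simp
  have xz: "x < ?z" using ss_mono[OF F(1), of 0 1] F m_pos by simp
  have zV: "?z \<in> vis (L - {(x,r)}) x r"
  proof -
    have "?z \<in> set (zsA x r)" using F(3) by (intro nth_mem) simp
    thus ?thesis using F(2) unfolding VA_def by simp
  qed
  have gap: "\<And>r'. (x,r') \<in> L \<Longrightarrow> r' \<le> r \<Longrightarrow> r' \<noteq> r \<Longrightarrow> r' \<le> ?z"
  proof (rule ccontr)
    fix r' assume h: "(x,r') \<in> L" "r' \<le> r" "r' \<noteq> r" "\<not> r' \<le> ?z"
    show False using vis_H1[OF zV, of x r'] h xz by simp
  qed
  have gr: "good x r" using less.prems by simp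
  hence wrap: "v ?z - v r = of_real lm * v x" unfolding good_def by simp
  show ?case
  proof (cases "?z = x + 1")
    case True
    have "{r'. (x,r') \<in> L \<and> r' \<le> r} = {r}"
    proof (intro set_eqI iffI)
      fix r' assume "r' \<in> {r'. (x,r') \<in> L \<and> r' \<le> r}"
      hence h: "(x,r') \<in> L" "r' \<le> r" by simp_all
      have "x + 2 \<le> r'" using L_len[OF h(1)] by simp
      thus "r' \<in> {r}" using gap[OF h] True by fastforce
    next
      fix r' assume "r' \<in> {r}" thus "r' \<in> {r'. (x,r') \<in> L \<and> r' \<le> r}" using xr by simp
    qed
    thus ?thesis using wrap True by simp
  next
    case False
    hence xzL: "(x, ?z) \<in> L" using c0 by simp
    have S: "{r'. (x,r') \<in> L \<and> r' \<le> r} = insert r {r'. (x,r') \<in> L \<and> r' \<le> ?z}"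
    proof (intro set_eqI iffI)
      fix r' assume "r' \<in> {r'. (x,r') \<in> L \<and> r' \<le> r}"
      hence h: "(x,r') \<in> L" "r' \<le> r" by simp_all
      show "r' \<in> insert r {r'. (x,r') \<in> L \<and> r' \<le> ?z}"
      proof (cases "r' = r")
        case False thus ?thesis using gap[OF h False] h by simp
      qed simp
    next
      fix r' assume "r' \<in> insert r {r'. (x,r') \<in> L \<and> r' \<le> ?z}"
      thus "r' \<in> {r'. (x,r') \<in> L \<and> r' \<le> r}" using xr zr by auto
    qed
    have fin: "finite {r'. (x,r') \<in> L \<and> r' \<le> ?z}"
      by (rule finite_subset[OF _ finR[of x]]) auto
    have nin: "r \<notin> {r'. (x,r') \<in> L \<and> r' \<le> ?z}" using zr by simp
    have cS: "card {r'. (x,r') \<in> L \<and> r' \<le> r} = Suc (card {r'. (x,r') \<in> L \<and> r' \<le> ?z})"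
      unfolding S using fin nin by simp
    have lt: "nat (?z - x) < nat (r - x)" using zr xz by simp
    have IH: "v (x+1) - v ?z = of_real (real (card {r'. (x,r') \<in> L \<and> r' \<le> ?z}) * lm) * v x"
      using less.hyps[OF lt xzL] less.prems(2) zr by simp
    have "v (x+1) - v r = (v (x+1) - v ?z) + (v ?z - v r)" by simp
    also have "\<dots> = of_real (real (card {r'. (x,r') \<in> L \<and> r' \<le> ?z}) * lm) * v x + of_real lm * v x"
      using IH wrap by simp
    also have "\<dots> = of_real (real (card {r'. (x,r') \<in> L \<and> r' \<le> r}) * lm) * v x"
      unfolding cS by (simp add: algebra_simps)
    finally show ?thesis .
  qed
qed

lemma fanL:
  assumes "(r,x) \<in> L" "\<forall>r'. (r',x) \<in> L \<and> r \<le> r' \<longrightarrow> good r' x"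
  shows "v (x-1) - v r = of_real (real (card {r'. (r',x) \<in> L \<and> r \<le> r'}) * lm) * v x"
  using assms
proof (induction "nat (x - r)" arbitrary: r rule: less_induct)
  case less
  note xr = less.prems(1)
  note F = zsA_facts[OF xr]
  let ?z = "zsA r x ! m"
  have c0: "zsA r x ! Suc m = ?z + 1 \<or> ((?z, zsA r x ! Suc m) \<in> L \<and> (?z, zsA r x ! Suc m) \<noteq> (r, x))"
    using consA[OF xr, of m] F m_pos by simp
  hence c0': "x = ?z + 1 \<or> ((?z, x) \<in> L \<and> (?z, x) \<noteq> (r, x))" using F(5) by simp
  have zr: "r < ?z" using ss_mono[OF F(1), of 0 m] F m_pos by simp
  have xz: "?z < x" using ss_mono[OF F(1), of m "m+1"] F m_pos by simp
  have zV: "?z \<in> vis (L - {(r,x)}) r x"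
  proof -
    have "?z \<in> set (zsA r x)" using F(3) by (intro nth_mem) simp
    thus ?thesis using F(2) unfolding VA_def by simp
  qed
  have gap: "\<And>r'. (r',x) \<in> L \<Longrightarrow> r \<le> r' \<Longrightarrow> r' \<noteq> r \<Longrightarrow> ?z \<le> r'"
  proof (rule ccontr)
    fix r' assume h: "(r',x) \<in> L" "r \<le> r'" "r' \<noteq> r" "\<not> ?z \<le> r'"
    show False using vis_H1[OF zV, of r' x] h xz by simp
  qed
  have gr: "good r x" using less.prems by simp
  hence wrap: "v ?z - v r = of_real lm * v x" unfolding good_def by simp
  show ?case
  proof (cases "x = ?z + 1")
    case True
    have "{r'. (r',x) \<in> L \<and> r \<le> r'} = {r}"
    proof (intro set_eqI iffI)
      fix r' assume "r' \<in> {r'. (r',x) \<in> L \<and> r \<le> r'}"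
      hence h: "(r',x) \<in> L" "r \<le> r'" by simp_all
      have "r' + 2 \<le> x" using L_len[OF h(1)] by simp
      thus "r' \<in> {r}" using gap[OF h] True by fastforce
    next
      fix r' assume "r' \<in> {r}" thus "r' \<in> {r'. (r',x) \<in> L \<and> r \<le> r'}" using xr by simp
    qed
    moreover have "x - 1 = ?z" using True by simp
    ultimately show ?thesis using wrap by simp
  next
    case False
    hence xzL: "(?z, x) \<in> L" using c0' by simp
    have S: "{r'. (r',x) \<in> L \<and> r \<le> r'} = insert r {r'. (r',x) \<in> L \<and> ?z \<le> r'}"
    proof (intro set_eqI iffI)
      fix r' assume "r' \<in> {r'. (r',x) \<in> L \<and> r \<le> r'}"
      hence h: "(r',x) \<in> L" "r \<le> r'" by simp_all
      show "r' \<in> insert r {r'. (r',x) \<in> L \<and> ?z \<le> r'}"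
      proof (cases "r' = r")
        case False thus ?thesis using gap[OF h False] h by simp
      qed simp
    next
      fix r' assume "r' \<in> insert r {r'. (r',x) \<in> L \<and> ?z \<le> r'}"
      thus "r' \<in> {r'. (r',x) \<in> L \<and> r \<le> r'}" using xr zr by auto
    qed
    have fin: "finite {r'. (r',x) \<in> L \<and> ?z \<le> r'}"
      by (rule finite_subset[OF _ finL[of x]]) auto
    have nin: "r \<notin> {r'. (r',x) \<in> L \<and> ?z \<le> r'}" using zr by simp
    have cS: "card {r'. (r',x) \<in> L \<and> r \<le> r'} = Suc (card {r'. (r',x) \<in> L \<and> ?z \<le> r'})"
      unfolding S using fin nin by simp
    have lt: "nat (x - ?z) < nat (x - r)" using zr xz by simp
    have IH: "v (x-1) - v ?z = of_real (real (card {r'. (r',x) \<in> L \<and> ?z \<le> r'}) * lm) * v x"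
      using less.hyps[OF lt xzL] less.prems(2) zr by simp
    have "v (x-1) - v r = (v (x-1) - v ?z) + (v ?z - v r)" by simp
    also have "\<dots> = of_real (real (card {r'. (r',x) \<in> L \<and> ?z \<le> r'}) * lm) * v x + of_real lm * v x"
      using IH wrap by simp
    also have "\<dots> = of_real (real (card {r'. (r',x) \<in> L \<and> r \<le> r'}) * lm) * v x"
      unfolding cS by (simp add: algebra_simps)
    finally show ?thesis .
  qed
qed

lemma sideR:
  assumes "\<forall>r. (x,r) \<in> L \<longrightarrow> r \<le> w" "w = x+1 \<or> (x,w) \<in> L" "\<forall>r. (x,r) \<in> L \<longrightarrow> good x r"
  shows "v (x+1) - v w = of_real (real (card {r. (x,r) \<in> L}) * lm) * v x"
proof (cases "(x,w) \<in> L")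
  case True
  have "{r'. (x,r') \<in> L \<and> r' \<le> w} = {r. (x,r) \<in> L}" using assms(1) by auto
  thus ?thesis using fanR[OF True] assms(3) by simp
next
  case False
  hence w: "w = x + 1" using assms(2) by simp
  have "{r. (x,r) \<in> L} = {}"
  proof (rule ccontr)
    assume "{r. (x,r) \<in> L} \<noteq> {}"
    then obtain r where r: "(x,r) \<in> L" by blast
    have "x + 2 \<le> r" using L_len[OF r] by simp
    thus False using assms(1) r w by fastforce
  qed
  thus ?thesis using w by simp
qed

lemma sideL:
  assumes "\<forall>r. (r,x) \<in> L \<longrightarrow> u \<le> r" "x = u+1 \<or> (u,x) \<in> L" "\<forall>r. (r,x) \<in> L \<longrightarrow> good r x"
  shows "v (x-1) - v u = of_real (real (card {r. (r,x) \<in> L}) * lm) * v x"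
proof (cases "(u,x) \<in> L")
  case True
  have "{r'. (r',x) \<in> L \<and> u \<le> r'} = {r. (r,x) \<in> L}" using assms(1) by auto
  thus ?thesis using fanL[OF True] assms(3) by simp
next
  case False
  hence w: "x = u + 1" using assms(2) by simp
  have "{r. (r,x) \<in> L} = {}"
  proof (rule ccontr)
    assume "{r. (r,x) \<in> L} \<noteq> {}"
    then obtain r where r: "(r,x) \<in> L" by blast
    have "r + 2 \<le> x" using L_len[OF r] by simp
    thus False using assms(1) r w by fastforce
  qed
  thus ?thesis using w by simp
qed

lemma interior_rel:
  assumes xP: "x \<notin> P"
  and R: "\<forall>r. (x,r) \<in> L \<longrightarrow> r \<le> w" "w = x+1 \<or> (x,w) \<in> L" "\<forall>r. (x,r) \<in> L \<longrightarrow> good x r"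
  and Lf: "\<forall>r. (r,x) \<in> L \<longrightarrow> u \<le> r" "x = u+1 \<or> (u,x) \<in> L" "\<forall>r. (r,x) \<in> L \<longrightarrow> good r x"
  shows "v u + v w = of_real lm * v x"
proof -
  have a: "v (x+1) - v w = of_real (real (card {r. (x,r) \<in> L}) * lm) * v x" using sideR[OF R] .
  have b: "v (x-1) - v u = of_real (real (card {r. (r,x) \<in> L}) * lm) * v x" using sideL[OF Lf] .
  have c: "v (x+1) + v (x-1) = of_real (real (cnt L P x) * lm) * v x" using v_rec .
  have cn: "real (cnt L P x) = 1 + real (card {r. (x,r) \<in> L}) + real (card {r. (r,x) \<in> L})"
    unfolding cnt_def using xP by simp
  have "v u + v w = (v (x+1) + v (x-1)) - (v (x+1) - v w) - (v (x-1) - v u)" by simp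
  also have "\<dots> = of_real lm * v x" unfolding a b c cn by (simp add: algebra_simps)
  finally show ?thesis .
qed

lemma good_all: "(a,b) \<in> L \<Longrightarrow> good a b"
proof (induction "nat (b - a)" arbitrary: a b rule: less_induct)
  case less
  note ab = less.prems
  note F = zsA_facts[OF ab]
  let ?zs = "zsA a b"
  have IHg: "\<And>c e. (c,e) \<in> L \<Longrightarrow> a \<le> c \<Longrightarrow> e \<le> b \<Longrightarrow> (c,e) \<noteq> (a,b) \<Longrightarrow> good c e"
  proof -
    fix c e assume h: "(c,e) \<in> L" "a \<le> c" "e \<le> b" "(c,e) \<noteq> (a,b)"
    have "c < e" using L_lt[OF h(1)] .
    hence "nat (e - c) < nat (b - a)" using h by auto
    thus "good c e" using less.hyps h(1) by blast
  qed
  have reg: "regl ?zs"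
    unfolding regl_def
  proof (intro allI impI)
    fix k assume k: "0 < k" "Suc k < length ?zs"
    hence k2: "Suc k < m + 2" using F by simp
    let ?x = "?zs ! k" and ?u = "?zs ! (k-1)" and ?w = "?zs ! Suc k"
    have ax: "a < ?x" using ss_mono[OF F(1), of 0 k] F k2 k by simp
    have xb: "?x < b" using ss_mono[OF F(1), of k "m+1"] F k2 by simp
    have wb: "?w \<le> b" using ss_mono_le[OF F(1), of "Suc k" "m+1"] F k2 by simp
    have au: "a \<le> ?u" using ss_mono_le[OF F(1), of 0 "k-1"] F k2 by simp
    have xP: "?x \<notin> P" using nc2[OF ab] ax xb by blast
    have rb: "\<forall>r. (?x,r) \<in> L \<longrightarrow> r \<le> ?w" using arc_right_bound[OF ab k(1) k2] by blast
    have lb: "\<forall>r. (r,?x) \<in> L \<longrightarrow> ?u \<le> r" using arc_left_bound[OF ab k(1) k2] by blast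
    have gR: "\<forall>r. (?x,r) \<in> L \<longrightarrow> good ?x r"
    proof (intro allI impI)
      fix r assume h: "(?x, r) \<in> L"
      have "r \<le> ?w" using rb h by blast
      thus "good ?x r" using IHg[of ?x r] h ax wb by simp
    qed
    have gL: "\<forall>r. (r,?x) \<in> L \<longrightarrow> good r ?x"
    proof (intro allI impI)
      fix r assume h: "(r, ?x) \<in> L"
      have "?u \<le> r" using lb h by blast
      thus "good r ?x" using IHg[of r ?x] h au xb by simp
    qed
    have cw: "?w = ?x + 1 \<or> (?x, ?w) \<in> L" using consA[OF ab k2] by blast
    have "Suc (k-1) = k" using k by simp
    hence "?x = ?u + 1 \<or> ((?u, ?x) \<in> L \<and> (?u, ?x) \<noteq> (a,b))" using consA[OF ab, of "k-1"] k2 by simp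
    hence cu: "?x = ?u + 1 \<or> (?u, ?x) \<in> L" by blast
    show "v (?zs ! (k-1)) + v (?zs ! Suc k) = of_real lm * v (?zs ! k)"
      using interior_rel[OF xP rb cw gR lb cu gL] .
  qed
  have z1b: "?zs ! 1 < b" using ss_mono[OF F(1), of 1 "m+1"] F m_pos by simp
  have az1: "a < ?zs ! 1" using ss_mono[OF F(1), of 0 1] F m_pos by simp
  have d01: "det (v (?zs ! 0)) (v (?zs ! 1)) = 1"
  proof -
    have c: "?zs ! 1 = a + 1 \<or> ((a, ?zs ! 1) \<in> L \<and> (a, ?zs ! 1) \<noteq> (a,b))"
      using consA[OF ab, of 0] F m_pos by simp
    have "D a (?zs ! 1) = 1"
    proof (cases "?zs ! 1 = a + 1")
      case True thus ?thesis using D_adj by simp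
    next
      case False
      hence "(a, ?zs ! 1) \<in> L" "(a, ?zs ! 1) \<noteq> (a,b)" using c by simp_all
      hence "good a (?zs ! 1)" using IHg[of a "?zs ! 1"] z1b by simp
      thus ?thesis by (rule good_D)
    qed
    thus ?thesis using F(4) unfolding D_def by simp
  qed
  have recw: "\<And>k. 0 < k \<Longrightarrow> Suc k < m + 2 \<Longrightarrow> v (?zs ! (k-1)) + v (?zs ! Suc k) = of_real lm * v (?zs ! k)"
    using reg F(3) unfolding regl_def by simp
  have CD: "\<And>i j. i \<le> j \<Longrightarrow> j < m + 2 \<Longrightarrow> det (v (?zs ! i)) (v (?zs ! j)) = sq lm (j - i)"
  proof -
    fix i j assume ij: "i \<le> j" "j < m + 2"
    have N: "2 \<le> m + 2" by simp
    show "det (v (?zs ! i)) (v (?zs ! j)) = sq lm (j - i)"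
      using chain_det[of "m+2" "\<lambda>k. v (?zs ! k)" lm, OF recw d01 N ij] by simp
  qed
  have CF: "\<And>k. 1 \<le> k \<Longrightarrow> k < m + 2 \<Longrightarrow> v (?zs ! k) = of_real (sq lm k) * v (?zs ! 1) - of_real (sq lm (k-1)) * v (?zs ! 0)"
  proof -
    fix k assume k: "1 \<le> k" "k < m + 2"
    show "v (?zs ! k) = of_real (sq lm k) * v (?zs ! 1) - of_real (sq lm (k-1)) * v (?zs ! 0)"
      using chain_formula[of "m+2" "\<lambda>k. v (?zs ! k)" lm, OF recw k] by simp
  qed
  have Dab: "D a b = 1" using CD[of 0 "m+1"] F sq_top[of m] unfolding D_def by simp
  have vb: "v b = v (?zs ! 1) - of_real lm * v a" using CF[of "m+1"] F sq_top[of m] sq_m[of m] by simp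
  have vm: "v (?zs ! m) = of_real lm * v (?zs ! 1) - of_real (lm^2 - 1) * v a"
    using CF[of m] F m_pos sq_m[of m] sq_m1[OF m_pos] by simp
  have w1: "v (?zs ! 1) - v b = of_real lm * v a" using vb by simp
  have w2: "v (?zs ! m) - v a = of_real lm * v b"
    unfolding vm vb by (simp add: algebra_simps power2_eq_square)
  show ?case unfolding good_def using Dab w1 w2 reg by simp
qed

end


lemma lam1: "lam 1 = 1"
proof -
  have "pi / real (1 + 2) = pi / 3" by simp
  thus ?thesis unfolding lam_def using cos_60 by simp
qed

context frz begin

lemma consec_mem: "consec p q \<Longrightarrow> p \<in> P \<and> q \<in> P \<and> p < q" unfolding consec_def by simp

lemma zsS_mem: assumes "consec p q" "k \<le> m" shows "zsS p q ! k \<in> vis L p q"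
proof -
  note F = zsS_facts[OF assms(1)]
  have "zsS p q ! k \<in> set (zsS p q)" using F(3) assms(2) by (intro nth_mem) simp
  thus ?thesis using F(2) unfolding VS_def by simp
qed

lemma sp_right_bound:
  assumes pq: "consec p q" and k: "k < m" and xr: "(zsS p q ! k, r) \<in> L"
  shows "r \<le> zsS p q ! Suc k"
proof (rule ccontr)
  assume H: "\<not> r \<le> zsS p q ! Suc k"
  note F = zsS_facts[OF pq]
  let ?x = "zsS p q ! k" and ?w = "zsS p q ! Suc k"
  have px: "p \<le> ?x" using ss_mono_le[OF F(1), of 0 k] F k by simp
  have xq: "?x < q" using ss_mono[OF F(1), of k m] F k by simp
  have xw: "?x < ?w" using ss_mono[OF F(1), of k "Suc k"] F k by simp
  have qP: "q \<in> P" using consec_mem[OF pq] by simp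
  have rq: "r \<le> q"
  proof (rule ccontr)
    assume "\<not> r \<le> q"
    thus False using nc2[OF xr qP] xq by simp
  qed
  have km: "Suc k \<le> m" using k by simp
  show False using vis_H1[OF zsS_mem[OF pq km], of ?x r] xr px rq xw H by simp
qed

lemma sp_left_bound:
  assumes pq: "consec p q" and k: "0 < k" "k \<le> m" and xr: "(r, zsS p q ! k) \<in> L"
  shows "zsS p q ! (k - 1) \<le> r"
proof (rule ccontr)
  assume H: "\<not> zsS p q ! (k - 1) \<le> r"
  note F = zsS_facts[OF pq]
  let ?x = "zsS p q ! k" and ?u = "zsS p q ! (k - 1)"
  have px: "p < ?x" using ss_mono[OF F(1), of 0 k] F k by simp
  have xq: "?x \<le> q" using ss_mono_le[OF F(1), of k m] F k by simp
  have ux: "?u < ?x" using ss_mono[OF F(1), of "k-1" k] F k by simp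
  have pP: "p \<in> P" using consec_mem[OF pq] by simp
  have rp: "p \<le> r"
  proof (rule ccontr)
    assume "\<not> p \<le> r"
    thus False using nc2[OF xr pP] px by simp
  qed
  have km: "k - 1 \<le> m" using k by simp
  show False using vis_H1[OF zsS_mem[OF pq km], of r ?x] xr rp xq ux H by simp
qed

lemma sp_reg: assumes pq: "consec p q" shows "regl (zsS p q)"
  unfolding regl_def
proof (intro allI impI)
  note F = zsS_facts[OF pq]
  let ?zs = "zsS p q"
  fix k assume k: "0 < k" "Suc k < length ?zs"
  hence k2: "Suc k < m + 1" using F by simp
  let ?x = "?zs ! k" and ?u = "?zs ! (k-1)" and ?w = "?zs ! Suc k"
  have px: "p < ?x" using ss_mono[OF F(1), of 0 k] F k2 k by simp
  have xq: "?x < q" using ss_mono[OF F(1), of k m] F k2 by simp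
  have xP: "?x \<notin> P" using pq px xq unfolding consec_def by blast
  have rb: "\<forall>r. (?x,r) \<in> L \<longrightarrow> r \<le> ?w" using sp_right_bound[OF pq] k2 by simp
  have lb: "\<forall>r. (r,?x) \<in> L \<longrightarrow> ?u \<le> r" using sp_left_bound[OF pq k(1)] k2 by simp
  have gR: "\<forall>r. (?x,r) \<in> L \<longrightarrow> good ?x r" using good_all by blast
  have gL: "\<forall>r. (r,?x) \<in> L \<longrightarrow> good r ?x" using good_all by blast
  have cw: "?w = ?x + 1 \<or> (?x, ?w) \<in> L" using consS[OF pq k2] .
  have "Suc (k-1) = k" using k by simp
  hence cu: "?x = ?u + 1 \<or> (?u, ?x) \<in> L" using consS[OF pq, of "k-1"] k2 by simp
  show "v (?zs ! (k-1)) + v (?zs ! Suc k) = of_real lm * v (?zs ! k)"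
    using interior_rel[OF xP rb cw gR lb cu gL] .
qed

lemma sp_d01: assumes pq: "consec p q" shows "D p (zsS p q ! 1) = 1"
proof -
  note F = zsS_facts[OF pq]
  have c: "zsS p q ! 1 = p + 1 \<or> (p, zsS p q ! 1) \<in> L" using consS[OF pq, of 0] F m_pos by simp
  show ?thesis
  proof (cases "zsS p q ! 1 = p + 1")
    case True thus ?thesis using D_adj by simp
  next
    case False
    hence "(p, zsS p q ! 1) \<in> L" using c by simp
    thus ?thesis using good_all good_D by blast
  qed
qed

lemma sp_chain:
  assumes pq: "consec p q"
  shows "\<And>i j. i \<le> j \<Longrightarrow> j \<le> m \<Longrightarrow> D (zsS p q ! i) (zsS p q ! j) = sq lm (j - i)"
    and "\<And>k. 1 \<le> k \<Longrightarrow> k \<le> m \<Longrightarrow> v (zsS p q ! k) = of_real (sq lm k) * v (zsS p q ! 1) - of_real (sq lm (k-1)) * v p"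
proof -
  note F = zsS_facts[OF pq]
  let ?zs = "zsS p q"
  have recw: "\<And>k. 0 < k \<Longrightarrow> Suc k < m + 1 \<Longrightarrow> v (?zs ! (k-1)) + v (?zs ! Suc k) = of_real lm * v (?zs ! k)"
    using sp_reg[OF pq] F(3) unfolding regl_def by simp
  have d01: "det (v (?zs ! 0)) (v (?zs ! 1)) = 1" using sp_d01[OF pq] F(4) unfolding D_def by simp
  fix i j assume ij: "i \<le> j" "j \<le> m"
  have N: "2 \<le> m + 1" using m_pos by simp
  have ij': "j < m + 1" using ij by simp
  show "D (zsS p q ! i) (zsS p q ! j) = sq lm (j - i)"
    using chain_det[of "m+1" "\<lambda>k. v (?zs ! k)" lm, OF recw d01 N ij(1) ij'] unfolding D_def by simp
next
  note F = zsS_facts[OF pq]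
  let ?zs = "zsS p q"
  have recw: "\<And>k. 0 < k \<Longrightarrow> Suc k < m + 1 \<Longrightarrow> v (?zs ! (k-1)) + v (?zs ! Suc k) = of_real lm * v (?zs ! k)"
    using sp_reg[OF pq] F(3) unfolding regl_def by simp
  fix k assume k: "1 \<le> k" "k \<le> m"
  have k': "k < m + 1" using k by simp
  show "v (zsS p q ! k) = of_real (sq lm k) * v (zsS p q ! 1) - of_real (sq lm (k-1)) * v p"
    using chain_formula[of "m+1" "\<lambda>k. v (?zs ! k)" lm, OF recw k(1) k'] F(4) by simp
qed

lemma sp_Dpq: "consec p q \<Longrightarrow> D p q = lm"
  using sp_chain(1)[of p q 0 m] zsS_facts[of p q] sq_m[of m] by simp

definition nxt :: "int \<Rightarrow> int" where "nxt p = (SOME q. consec p q)"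

lemma consec_ex: assumes "p \<in> P" shows "\<exists>q. consec p q"
proof -
  obtain q where q: "q \<in> P" "p + 1 \<le> q" "\<forall>r\<in>P. p + 1 \<le> r \<longrightarrow> q \<le> r" using spoke_ge[of "p+1"] by blast
  have "consec p q" unfolding consec_def using q assms by force
  thus ?thesis by blast
qed

lemma consec_uniq: assumes "consec p q" "consec p q'" shows "q = q'"
proof (rule ccontr)
  assume "q \<noteq> q'"
  hence "q < q' \<or> q' < q" by linarith
  thus False using assms unfolding consec_def by blast
qed

lemma nxt_consec: "p \<in> P \<Longrightarrow> consec p (nxt p)"
  unfolding nxt_def using consec_ex someI_ex by metis

lemma nxt_eq: "consec p q \<Longrightarrow> nxt p = q"
  using nxt_consec consec_uniq consec_mem by blast

definition U :: "int \<Rightarrow> complex" where "U p = v (zsS p (nxt p) ! 1) - of_real lm * v p"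

lemma U_step:
  assumes pq: "consec p q"
  shows "U q = U p" "v q = v p + of_real lm * U p" "det (v p) (U p) = 1"
proof -
  have qP: "q \<in> P" using consec_mem[OF pq] by simp
  define q' where "q' = nxt q"
  have qq: "consec q q'" unfolding q'_def using nxt_consec[OF qP] .
  have np: "nxt p = q" using nxt_eq[OF pq] .
  note F = zsS_facts[OF pq] and G = zsS_facts[OF qq]
  let ?ys = "zsS p q" and ?zs = "zsS q q'"
  let ?y1 = "?ys ! 1" and ?ym = "?ys ! (m-1)" and ?z1 = "?zs ! 1"
  have Uq: "U q = v ?z1 - of_real lm * v q" unfolding U_def q'_def by simp
  have Up: "U p = v ?y1 - of_real lm * v p" unfolding U_def np by simp
  have rb: "\<forall>r. (q,r) \<in> L \<longrightarrow> r \<le> ?z1" using sp_right_bound[OF qq, of 0] G m_pos by simp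
  have cw: "?z1 = q + 1 \<or> (q, ?z1) \<in> L" using consS[OF qq, of 0] G m_pos by simp
  have lb: "\<forall>r. (r,q) \<in> L \<longrightarrow> ?ym \<le> r" using sp_left_bound[OF pq, of m] F m_pos by simp
  have "Suc (m-1) = m" using m_pos by simp
  hence cu: "q = ?ym + 1 \<or> (?ym, q) \<in> L" using consS[OF pq, of "m-1"] F m_pos by simp
  have gR: "\<forall>r. (q,r) \<in> L \<longrightarrow> good q r" using good_all by blast
  have gL: "\<forall>r. (r,q) \<in> L \<longrightarrow> good r q" using good_all by blast
  have a: "v (q+1) - v ?z1 = of_real (real (card {r. (q,r) \<in> L}) * lm) * v q" using sideR[OF rb cw gR] .
  have b: "v (q-1) - v ?ym = of_real (real (card {r. (r,q) \<in> L}) * lm) * v q" using sideL[OF lb cu gL] .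
  have c: "v (q+1) + v (q-1) = of_real (real (cnt L P q) * lm) * v q" using v_rec .
  have cn: "real (cnt L P q) = 2 + real (card {r. (q,r) \<in> L}) + real (card {r. (r,q) \<in> L})"
    unfolding cnt_def using qP by simp
  have rel: "v ?z1 + v ?ym = of_real (2 * lm) * v q"
  proof -
    have "v ?z1 + v ?ym = (v (q+1) + v (q-1)) - (v (q+1) - v ?z1) - (v (q-1) - v ?ym)" by simp
    also have "\<dots> = of_real (2 * lm) * v q" unfolding a b c cn by (simp add: algebra_simps)
    finally show ?thesis .
  qed
  have vq: "v q = of_real lm * v ?y1 - of_real (lm^2 - 1) * v p"
    using sp_chain(2)[OF pq, of m] F m_pos sq_m[of m] sq_m1[OF m_pos] by simp
  have ym: "of_real lm * v q - v ?ym = v ?y1 - of_real lm * v p"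
  proof (cases "m = 1")
    case True
    have "?ym = p" using F True by simp
    moreover have "?y1 = q" using F True by simp
    moreover have "lm = 1" using True lam1 by simp
    ultimately show ?thesis by simp
  next
    case False
    hence m2: "2 \<le> m" using m_pos by simp
    have e: "v ?ym = of_real (sq lm (m-1)) * v ?y1 - of_real (sq lm (m-2)) * v p"
      using sp_chain(2)[OF pq, of "m-1"] m2 by (simp add: diff_diff_add numeral_2_eq_2)
    have r: "sq lm m = lm * sq lm (m-1) - sq lm (m-2)"
    proof -
      have "m = Suc (Suc (m-2))" using m2 by simp
      hence "sq lm m = lm * sq lm (Suc (m-2)) - sq lm (m-2)" by (metis sq.simps(3))
      moreover have "Suc (m-2) = m - 1" using m2 by simp
      ultimately show ?thesis by simp
    qed
    have s2: "sq lm (m-2) = lm * (lm^2 - 1) - lm" using r sq_m[of m] sq_m1[OF m_pos] by simp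
    show ?thesis unfolding vq e s2 sq_m1[OF m_pos] by (simp add: algebra_simps power2_eq_square)
  qed
  show "U q = U p"
  proof -
    have "U q = v ?z1 - of_real lm * v q" by (rule Uq)
    also have "\<dots> = of_real lm * v q - v ?ym" using rel by (simp add: algebra_simps)
    also have "\<dots> = U p" using ym Up by simp
    finally show ?thesis .
  qed
  show "v q = v p + of_real lm * U p" unfolding Up vq by (simp add: algebra_simps power2_eq_square)
  show "det (v p) (U p) = 1" unfolding Up using sp_d01[OF pq] unfolding D_def by simp
qed

lemma SP:
  assumes "p \<in> P" "p' \<in> P" "p \<le> p'"
  shows "\<exists>t. 0 \<le> t \<and> (p < p' \<longrightarrow> lm \<le> t) \<and> v p' = v p + of_real t * U p \<and> U p' = U p"
  using assms
proof (induction "nat (p' - p)" arbitrary: p rule: less_induct)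
  case less
  show ?case
  proof (cases "p = p'")
    case True thus ?thesis by (intro exI[of _ 0]) simp
  next
    case False
    define q where "q = nxt p"
    have pq: "consec p q" unfolding q_def using nxt_consec less.prems(1) .
    have qp': "q \<le> p'"
    proof (rule ccontr)
      assume "\<not> q \<le> p'"
      hence a: "p' < q" by simp
      have b: "p < p'" using less.prems(3) False by simp
      have "\<forall>r\<in>P. \<not>(p < r \<and> r < q)" using pq unfolding consec_def by blast
      thus False using a b less.prems(2) by blast
    qed
    have qP: "q \<in> P" using consec_mem[OF pq] by simp
    have lt: "nat (p' - q) < nat (p' - p)" using consec_mem[OF pq] qp' by simp
    obtain t where t: "0 \<le> t" "v p' = v q + of_real t * U q" "U p' = U q"
      using less.hyps[OF lt qP less.prems(2) qp'] by blast
    note S = U_step[OF pq]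
    have "v p' = v p + of_real (lm + t) * U p" unfolding t(2) S(1) S(2) by (simp add: algebra_simps)
    moreover have "0 \<le> lm + t" "lm \<le> lm + t" using t(1) lam_pos[OF m_pos] by simp_all
    moreover have "U p' = U p" using t(3) S(1) by simp
    ultimately show ?thesis by blast
  qed
qed

lemma D_spokes:
  assumes "p \<in> P" "q \<in> P" "r \<in> P" "p \<le> q" "q \<le> r"
  shows "0 \<le> D p q" "p < q \<Longrightarrow> lm \<le> D p q" "D p r = D p q + D q r"
proof -
  obtain t1 where t1: "0 \<le> t1" "p < q \<longrightarrow> lm \<le> t1" "v q = v p + of_real t1 * U p" "U q = U p"
    using SP[OF assms(1,2,4)] by blast
  obtain t2 where t2: "0 \<le> t2" "v r = v p + of_real t2 * U p"
    using SP[OF assms(1,3)] assms by fastforce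
  have dp: "det (v p) (U p) = 1" using U_step(3)[OF nxt_consec[OF assms(1)]] .
  have Dq: "D p q = t1" unfolding D_def t1(3) using dp by simp
  show "0 \<le> D p q" using Dq t1 by simp
  show "p < q \<Longrightarrow> lm \<le> D p q" using Dq t1 by simp
  have Dr: "D p r = t2" unfolding D_def t2(2) using dp by simp
  have Dqr: "D q r = t2 - t1" unfolding D_def t1(3) t2(2) using dp det_swap[of "U p" "v p"] by (simp add: algebra_simps)
  show "D p r = D p q + D q r" using Dq Dr Dqr by simp
qed

end


lemma low1: "(1::real) \<le> u \<Longrightarrow> 1 \<le> w \<Longrightarrow> 0 \<le> B \<Longrightarrow> B \<le> u * w * B"
proof -
  assume a: "1 \<le> u" "1 \<le> w" "0 \<le> B"
  have "1 * 1 \<le> u * w" using a by (intro mult_mono) auto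
  hence "1 * B \<le> (u * w) * B" using a(3) by (intro mult_right_mono) auto
  thus ?thesis by simp
qed

lemma nn3: "(0::real) \<le> u \<Longrightarrow> 0 \<le> w \<Longrightarrow> 0 \<le> B \<Longrightarrow> 0 \<le> u * w * B"
  by simp

context frz begin

definition AP :: "int \<Rightarrow> int \<Rightarrow> bool" where
  "AP a b \<longleftrightarrow> (\<forall>x y. a \<le> x \<longrightarrow> x < y \<longrightarrow> y \<le> b \<longrightarrow> 1 \<le> D x y \<and> (D x y = 1 \<longrightarrow> y = x + 1 \<or> (x,y) \<in> L))"

lemma D_self: "D x x = 0" unfolding D_def by simp

lemma decomp:
  assumes "D p q = 1"
  shows "v x = of_real (D x q) * v p + of_real (D p x) * v q"
  using cramer1[of "v p" "v q" "v x"] assms unfolding D_def by simp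

lemma AP_use: "AP a b \<Longrightarrow> a \<le> x \<Longrightarrow> x < y \<Longrightarrow> y \<le> b \<Longrightarrow> 1 \<le> D x y"
  unfolding AP_def by blast

lemma region_pos:
  assumes ss: "sorted_wrt (<) zs" and len: "length zs = Suc N" and N1: "1 \<le> N" and Nm: "N \<le> m + 1"
  and dets: "\<And>i j. i \<le> j \<Longrightarrow> j \<le> N \<Longrightarrow> D (zs!i) (zs!j) = sq lm (j - i)"
  and gaps: "\<And>k. k < N \<Longrightarrow> zs!(Suc k) = zs!k + 1 \<or> ((zs!k, zs!(Suc k)) \<in> L \<and> AP (zs!k) (zs!(Suc k)))"
  and xy: "zs!0 \<le> x" "x < y" "y \<le> zs!N"
  shows "1 \<le> D x y \<and> (D x y = 1 \<longrightarrow> y = x + 1 \<or> (x,y) \<in> L \<or> (x = zs!0 \<and> y = zs!N \<and> N = m + 1))"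
proof -
  have l2: "length zs \<ge> 2" using len N1 by simp
  have xl: "x < zs!(length zs - 1)" using xy len by simp
  obtain k where k: "Suc k < length zs" "zs!k \<le> x" "x < zs!(Suc k)" using ss_locate[OF ss l2 xy(1) xl] by blast
  have kN: "k < N" using k len by simp
  let ?a = "zs!k" and ?b = "zs!Suc k"
  have g: "?b = ?a + 1 \<or> ((?a, ?b) \<in> L \<and> AP ?a ?b)" using gaps[OF kN] .
  show ?thesis
  proof (cases "y \<le> ?b")
    case True
    show ?thesis
    proof (cases "?b = ?a + 1")
      case True2: True
      have "x = ?a" using k True2 by simp
      moreover have "y = x + 1" using \<open>x = ?a\<close> True True2 xy(2) by simp
      ultimately show ?thesis using D_adj by simp
    next
      case False
      hence ap: "AP ?a ?b" using g by simp
      show ?thesis using ap unfolding AP_def using k(2) xy(2) True by blast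
    qed
  next
    case False
    hence yb: "?b < y" by simp
    have y0: "zs!0 < y" using xy by simp
    have yl: "y \<le> zs!(length zs - 1)" using xy len by simp
    obtain l where l: "0 < l" "l < length zs" "zs!(l-1) < y" "y \<le> zs!l" using ss_locate2[OF ss l2 y0 yl] by blast
    have lN: "l \<le> N" using l len by simp
    have kl: "Suc k < l"
    proof (rule ccontr)
      assume "\<not> Suc k < l" hence "l \<le> Suc k" by simp
      hence "zs!l \<le> ?b" using ss_mono_le[OF ss _ k(1)] by simp
      thus False using yb l(4) by simp
    qed
    let ?c = "zs!(l-1)" and ?d = "zs!l"
    have sl: "Suc (l-1) = l" using l by simp
    have g2: "?d = ?c + 1 \<or> ((?c, ?d) \<in> L \<and> AP ?c ?d)" using gaps[of "l-1"] l lN sl by simp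
    define \<alpha> where "\<alpha> = D x ?b"
    define \<beta> where "\<beta> = D ?a x"
    define \<gamma> where "\<gamma> = D y ?d"
    define \<delta> where "\<delta> = D ?c y"
    have dab: "D ?a ?b = 1" using dets[of k "Suc k"] kN by simp
    have dcd: "D ?c ?d = 1" using dets[of "l-1" l] l lN by simp
    have vx: "v x = of_real \<alpha> * v ?a + of_real \<beta> * v ?b" unfolding \<alpha>_def \<beta>_def by (rule decomp[OF dab])
    have vy: "v y = of_real \<gamma> * v ?c + of_real \<delta> * v ?d" unfolding \<gamma>_def \<delta>_def by (rule decomp[OF dcd])
    have Dxy: "D x y = \<alpha>*\<gamma>*D ?a ?c + \<alpha>*\<delta>*D ?a ?d + \<beta>*\<gamma>*D ?b ?c + \<beta>*\<delta>*D ?b ?d"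
      unfolding D_def vx vy by (simp add: algebra_simps)
    have e1: "D ?a ?c = sq lm (l - 1 - k)" using dets[of k "l-1"] kl lN by simp
    have e2: "D ?a ?d = sq lm (l - k)" using dets[of k l] kl lN by simp
    have e3: "D ?b ?c = sq lm (l - 1 - Suc k)" using dets[of "Suc k" "l-1"] kl lN by simp
    have e4: "D ?b ?d = sq lm (l - 1 - k)" using dets[of "Suc k" l] kl lN by simp
    have s1: "1 \<le> sq lm (l - 1 - k)" using sq_ge1[of "l-1-k" m] kl lN Nm by simp
    have s2: "1 \<le> sq lm (l - k)" using sq_ge1[of "l-k" m] kl lN Nm by simp
    have s3: "0 \<le> sq lm (l - 1 - Suc k)" using sq_nonneg[of "l - 1 - Suc k" m] kl lN Nm by simp
    have \<alpha>1: "1 \<le> \<alpha>"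
    proof (cases "?b = ?a + 1")
      case True hence "x = ?a" using k by simp
      thus ?thesis unfolding \<alpha>_def using True D_adj by simp
    next
      case False hence "AP ?a ?b" using g by simp
      thus ?thesis unfolding \<alpha>_def using AP_use k by simp
    qed
    have \<beta>0: "0 \<le> \<beta> \<and> (x \<noteq> ?a \<longrightarrow> 1 \<le> \<beta>)"
    proof (cases "x = ?a")
      case True thus ?thesis unfolding \<beta>_def using D_self by simp
    next
      case False
      hence ax: "?a < x" using k by simp
      hence "?b \<noteq> ?a + 1" using k by auto
      hence "AP ?a ?b" using g by simp
      hence "1 \<le> \<beta>" unfolding \<beta>_def using AP_use ax k by simp
      thus ?thesis by simp
    qed
    have \<delta>1: "1 \<le> \<delta>"
    proof (cases "?d = ?c + 1")
      case True hence "y = ?d" using l by simp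
      thus ?thesis unfolding \<delta>_def using True D_adj by simp
    next
      case False hence "AP ?c ?d" using g2 by simp
      thus ?thesis unfolding \<delta>_def using AP_use l by simp
    qed
    have \<gamma>0: "0 \<le> \<gamma> \<and> (y \<noteq> ?d \<longrightarrow> 1 \<le> \<gamma>)"
    proof (cases "y = ?d")
      case True thus ?thesis unfolding \<gamma>_def using D_self by simp
    next
      case False
      hence yd: "y < ?d" using l by simp
      hence "?d \<noteq> ?c + 1" using l by auto
      hence "AP ?c ?d" using g2 by simp
      hence "1 \<le> \<gamma>" unfolding \<gamma>_def using AP_use yd l by simp
      thus ?thesis by simp
    qed
    have \<alpha>0: "0 \<le> \<alpha>" using \<alpha>1 by simp
    have \<delta>0: "0 \<le> \<delta>" using \<delta>1 by simp
    have t1: "0 \<le> \<alpha>*\<gamma>*D ?a ?c" using nn3[OF \<alpha>0 _ ] \<gamma>0 e1 s1 by simp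
    have t3: "0 \<le> \<beta>*\<gamma>*D ?b ?c" using nn3 \<beta>0 \<gamma>0 e3 s3 by simp
    have t4: "0 \<le> \<beta>*\<delta>*D ?b ?d" using nn3 \<beta>0 \<delta>0 e4 s1 by simp
    have t2: "D ?a ?d \<le> \<alpha>*\<delta>*D ?a ?d" using low1[OF \<alpha>1 \<delta>1] e2 s2 by simp
    have main: "D ?a ?d \<le> D x y" using Dxy t1 t2 t3 t4 by linarith
    show ?thesis
    proof (cases "l - k \<le> m")
      case True
      have "1 < sq lm (l - k)" using sq_gt1[of "l-k" m] True kl by simp
      hence "1 < D x y" using main e2 by simp
      thus ?thesis by simp
    next
      case False
      hence lk: "l - k = m + 1" using kl lN Nm by simp
      hence k0: "k = 0" and lm1: "l = m + 1" and NN: "N = m + 1" using kl lN Nm by simp_all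
      have "1 \<le> D x y" using main e2 lk sq_top[of m] by simp
      moreover have "D x y = 1 \<longrightarrow> x = zs!0 \<and> y = zs!N \<and> N = m + 1"
      proof (rule ccontr)
        assume H: "\<not> (D x y = 1 \<longrightarrow> x = zs!0 \<and> y = zs!N \<and> N = m + 1)"
        hence D1: "D x y = 1" and ne: "x \<noteq> ?a \<or> y \<noteq> ?d" using k0 lm1 NN by auto
        have A: "D ?a ?c = lm" using e1 lk sq_m[of m] lm1 k0 by simp
        have lmg: "1 \<le> lm" using lam_ge1[OF m_pos] .
        have Bt: "D ?b ?d = lm" using e4 lk sq_m[of m] lm1 k0 by simp
        have "1 \<le> \<alpha>*\<gamma>*D ?a ?c + \<beta>*\<delta>*D ?b ?d"
        proof (cases "x \<noteq> ?a")
          case True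
          hence b1: "1 \<le> \<beta>" using \<beta>0 by simp
          have "D ?b ?d \<le> \<beta>*\<delta>*D ?b ?d" using low1[OF b1 \<delta>1, of "D ?b ?d"] Bt lmg by simp
          hence "1 \<le> \<beta>*\<delta>*D ?b ?d" using Bt lmg by linarith
          moreover have "0 \<le> \<alpha>*\<gamma>*D ?a ?c" using t1 .
          ultimately show ?thesis by linarith
        next
          case False
          hence "y \<noteq> ?d" using ne by simp
          hence g1: "1 \<le> \<gamma>" using \<gamma>0 by simp
          have "D ?a ?c \<le> \<alpha>*\<gamma>*D ?a ?c" using low1[OF \<alpha>1 g1, of "D ?a ?c"] A lmg by simp
          hence "1 \<le> \<alpha>*\<gamma>*D ?a ?c" using A lmg by linarith
          moreover have "0 \<le> \<beta>*\<delta>*D ?b ?d" using t4 .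
          ultimately show ?thesis by linarith
        qed
        moreover have "1 \<le> \<alpha>*\<delta>*D ?a ?d" using t2 e2 lk sq_top[of m] by simp
        ultimately have "2 \<le> D x y" using Dxy t3 by linarith
        thus False using D1 by simp
      qed
      ultimately show ?thesis by blast
    qed
  qed
qed

lemma arc_chain:
  assumes ab: "(a,b) \<in> L"
  shows "\<And>i j. i \<le> j \<Longrightarrow> j \<le> m + 1 \<Longrightarrow> D (zsA a b ! i) (zsA a b ! j) = sq lm (j - i)"
proof -
  note F = zsA_facts[OF ab]
  let ?zs = "zsA a b"
  have recw: "\<And>k. 0 < k \<Longrightarrow> Suc k < m + 2 \<Longrightarrow> v (?zs ! (k-1)) + v (?zs ! Suc k) = of_real lm * v (?zs ! k)"
    using good_all[OF ab] F(3) unfolding good_def regl_def by simp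
  have "D a (?zs ! 1) = 1"
  proof -
    have c: "?zs ! 1 = a + 1 \<or> ((a, ?zs ! 1) \<in> L \<and> (a, ?zs ! 1) \<noteq> (a,b))"
      using consA[OF ab, of 0] F m_pos by simp
    show ?thesis
    proof (cases "?zs ! 1 = a + 1")
      case True thus ?thesis using D_adj by simp
    next
      case False
      hence "(a, ?zs ! 1) \<in> L" using c by simp
      thus ?thesis using good_all good_D by blast
    qed
  qed
  hence d01: "det (v (?zs ! 0)) (v (?zs ! 1)) = 1" using F(4) unfolding D_def by simp
  fix i j assume ij: "i \<le> j" "j \<le> m + 1"
  have N: "2 \<le> m + 2" by simp
  have ij': "j < m + 2" using ij by simp
  show "D (?zs ! i) (?zs ! j) = sq lm (j - i)"
    using chain_det[of "m+2" "\<lambda>k. v (?zs ! k)" lm, OF recw d01 N ij(1) ij'] unfolding D_def by simp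
qed

lemma arc_AP: "(a,b) \<in> L \<Longrightarrow> AP a b"
proof (induction "nat (b - a)" arbitrary: a b rule: less_induct)
  case less
  note ab = less.prems
  note F = zsA_facts[OF ab]
  let ?zs = "zsA a b"
  show ?case unfolding AP_def
  proof (intro allI impI)
    fix x y assume xy: "a \<le> x" "x < y" "y \<le> b"
    have gaps: "\<And>k. k < m + 1 \<Longrightarrow> ?zs!(Suc k) = ?zs!k + 1 \<or> ((?zs!k, ?zs!(Suc k)) \<in> L \<and> AP (?zs!k) (?zs!(Suc k)))"
    proof -
      fix k assume k: "k < m + 1"
      have c: "?zs!(Suc k) = ?zs!k + 1 \<or> ((?zs!k, ?zs!(Suc k)) \<in> L \<and> (?zs!k, ?zs!(Suc k)) \<noteq> (a,b))"
        using consA[OF ab, of k] k by simp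
      show "?zs!(Suc k) = ?zs!k + 1 \<or> ((?zs!k, ?zs!(Suc k)) \<in> L \<and> AP (?zs!k) (?zs!(Suc k)))"
      proof (cases "?zs!(Suc k) = ?zs!k + 1")
        case False
        hence h: "(?zs!k, ?zs!(Suc k)) \<in> L" "(?zs!k, ?zs!(Suc k)) \<noteq> (a,b)" using c by simp_all
        have a1: "a \<le> ?zs!k" using ss_mono_le[OF F(1), of 0 k] F k by simp
        have b1: "?zs!(Suc k) \<le> b" using ss_mono_le[OF F(1), of "Suc k" "m+1"] F k by simp
        have lt1: "?zs!k < ?zs!(Suc k)" using L_lt[OF h(1)] .
        have "nat (?zs!(Suc k) - ?zs!k) < nat (b - a)" using a1 b1 lt1 h(2) by auto
        thus ?thesis using less.hyps h(1) by blast
      qed simp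
    qed
    have len: "length ?zs = Suc (m+1)" using F by simp
    have N1: "1 \<le> m + 1" by simp
    have Nm: "m + 1 \<le> m + 1" by simp
    have x0: "?zs!0 \<le> x" using F xy by simp
    have yN: "y \<le> ?zs!(m+1)" using F xy by simp
    have R: "1 \<le> D x y \<and> (D x y = 1 \<longrightarrow> y = x + 1 \<or> (x,y) \<in> L \<or> (x = ?zs!0 \<and> y = ?zs!(m+1) \<and> m + 1 = m + 1))"
      using region_pos[OF F(1) len N1 Nm arc_chain[OF ab] gaps x0 xy(2) yN] .
    have "x = ?zs!0 \<and> y = ?zs!(m+1) \<and> m + 1 = m + 1 \<Longrightarrow> (x,y) \<in> L" using F ab by simp
    thus "1 \<le> D x y \<and> (D x y = 1 \<longrightarrow> y = x + 1 \<or> (x,y) \<in> L)" using R by blast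
  qed
qed

lemma seg_AP: assumes pq: "consec p q" shows "AP p q"
  unfolding AP_def
proof (intro allI impI)
  note F = zsS_facts[OF pq]
  let ?zs = "zsS p q"
  fix x y assume xy: "p \<le> x" "x < y" "y \<le> q"
  have gaps: "\<And>k. k < m \<Longrightarrow> ?zs!(Suc k) = ?zs!k + 1 \<or> ((?zs!k, ?zs!(Suc k)) \<in> L \<and> AP (?zs!k) (?zs!(Suc k)))"
    using consS[OF pq] arc_AP by auto
  have len: "length ?zs = Suc m" using F by simp
  have m1: "1 \<le> m" using m_pos by simp
  have mm: "m \<le> m + 1" by simp
  have x0: "?zs!0 \<le> x" using F xy by simp
  have yN: "y \<le> ?zs!m" using F xy by simp
  have R: "1 \<le> D x y \<and> (D x y = 1 \<longrightarrow> y = x + 1 \<or> (x,y) \<in> L \<or> (x = ?zs!0 \<and> y = ?zs!m \<and> m = m + 1))"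
    using region_pos[OF F(1) len m1 mm sp_chain(1)[OF pq] gaps x0 xy(2) yN] .
  show "1 \<le> D x y \<and> (D x y = 1 \<longrightarrow> y = x + 1 \<or> (x,y) \<in> L)" using R by simp
qed

lemma D_main:
  assumes xy: "x < y"
  shows "1 \<le> D x y \<and> (D x y = 1 \<longrightarrow> y = x + 1 \<or> (x,y) \<in> L)"
proof (cases "\<exists>r\<in>P. x < r \<and> r < y")
  case False
  obtain p where p: "p \<in> P" "p \<le> x" "\<forall>r\<in>P. r \<le> x \<longrightarrow> r \<le> p" using spoke_le[of x] by blast
  obtain q where q: "q \<in> P" "y \<le> q" "\<forall>r\<in>P. y \<le> r \<longrightarrow> q \<le> r" using spoke_ge[of y] by blast
  have pq: "consec p q" unfolding consec_def
  proof (intro conjI ballI)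
    show "p \<in> P" "q \<in> P" using p q by simp_all
    show "p < q" using p q xy by simp
    fix r assume r: "r \<in> P"
    show "\<not> (p < r \<and> r < q)"
    proof
      assume h: "p < r \<and> r < q"
      have "\<not> r \<le> x" using p(3) r h by fastforce
      moreover have "\<not> y \<le> r" using q(3) r h by fastforce
      ultimately show False using False r by auto
    qed
  qed
  show ?thesis using seg_AP[OF pq] p q xy unfolding AP_def by blast
next
  case True
  then obtain r where r: "r \<in> P" "x < r" "r < y" by blast
  obtain p where p: "p \<in> P" "p \<le> x" "\<forall>r\<in>P. r \<le> x \<longrightarrow> r \<le> p" using spoke_le[of x] by blast
  obtain q where q: "q \<in> P" "x + 1 \<le> q" "\<forall>r\<in>P. x + 1 \<le> r \<longrightarrow> q \<le> r" using spoke_ge[of "x+1"] by blast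
  obtain p' where p': "p' \<in> P" "p' \<le> y - 1" "\<forall>r\<in>P. r \<le> y - 1 \<longrightarrow> r \<le> p'" using spoke_le[of "y-1"] by blast
  obtain q' where q': "q' \<in> P" "y \<le> q'" "\<forall>r\<in>P. y \<le> r \<longrightarrow> q' \<le> r" using spoke_ge[of y] by blast
  have pq: "consec p q" unfolding consec_def
  proof (intro conjI ballI)
    show "p \<in> P" "q \<in> P" using p q by simp_all
    show "p < q" using p q by simp
    fix r assume r: "r \<in> P"
    show "\<not> (p < r \<and> r < q)"
    proof
      assume h: "p < r \<and> r < q"
      have "\<not> r \<le> x" using p(3) r h by fastforce
      moreover have "\<not> x + 1 \<le> r" using q(3) r h by fastforce
      ultimately show False by simp
    qed
  qed
  have pq': "consec p' q'" unfolding consec_def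
  proof (intro conjI ballI)
    show "p' \<in> P" "q' \<in> P" using p' q' by simp_all
    show "p' < q'" using p' q' by simp
    fix r assume r: "r \<in> P"
    show "\<not> (p' < r \<and> r < q')"
    proof
      assume h: "p' < r \<and> r < q'"
      have "\<not> r \<le> y - 1" using p'(3) r h by fastforce
      moreover have "\<not> y \<le> r" using q'(3) r h by fastforce
      ultimately show False by simp
    qed
  qed
  have qr: "q \<le> r" using q(3) r by simp
  have rp': "r \<le> p'" using p'(3) r by simp
  have lmp: "0 < lm" using lam_pos[OF m_pos] .
  have lm2: "lm < 2" using lam_lt2 .
  define A1 where "A1 = D x q"
  define B1 where "B1 = D p x"
  define A2 where "A2 = D y q'"
  define B2 where "B2 = D p' y"
  have A1: "1 \<le> A1" unfolding A1_def using AP_use[OF seg_AP[OF pq]] p q by simp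
  have B1: "0 \<le> B1"
  proof (cases "x = p")
    case True thus ?thesis unfolding B1_def using D_self by simp
  next
    case False thus ?thesis unfolding B1_def using AP_use[OF seg_AP[OF pq], of p x] p q by simp
  qed
  have B2: "1 \<le> B2" unfolding B2_def using AP_use[OF seg_AP[OF pq']] p' q' by simp
  have A2: "0 \<le> A2"
  proof (cases "y = q'")
    case True thus ?thesis unfolding A2_def using D_self by simp
  next
    case False thus ?thesis unfolding A2_def using AP_use[OF seg_AP[OF pq'], of y q'] p' q' by simp
  qed
  have dpq: "det (v p) (v q) = lm" using sp_Dpq[OF pq] unfolding D_def .
  have dpq': "det (v p') (v q') = lm" using sp_Dpq[OF pq'] unfolding D_def .
  have vx: "of_real lm * v x = of_real A1 * v p + of_real B1 * v q"
    using cramer[of "v p" "v q" "v x"] dpq lmp unfolding A1_def B1_def D_def by simp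
  have vy: "of_real lm * v y = of_real A2 * v p' + of_real B2 * v q'"
    using cramer[of "v p'" "v q'" "v y"] dpq' lmp unfolding A2_def B2_def D_def by simp
  have E: "lm * lm * D x y = A1*A2*D p p' + A1*B2*D p q' + B1*A2*D q p' + B1*B2*D q q'"
  proof -
    have "lm * lm * D x y = det (of_real lm * v x) (of_real lm * v y)" unfolding D_def by simp
    also have "\<dots> = A1*A2*D p p' + A1*B2*D p q' + B1*A2*D q p' + B1*B2*D q q'"
      unfolding vx vy D_def by (simp add: algebra_simps)
    finally show ?thesis .
  qed
  have a1: "p \<le> q" using p(2) q(2) by linarith
  have a2: "q \<le> p'" using qr rp' by linarith
  have a3: "p' < q'" using p'(2) q'(2) by linarith
  have pp': "p \<le> p'" "p \<le> q" "q \<le> p'" "p' \<le> q'" "q < q'" using a1 a2 a3 by linarith+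
  have d1: "0 \<le> D p p'" using D_spokes(1)[of p p' p'] p p' pp' by simp
  have d3: "0 \<le> D q p'" using D_spokes(1)[of q p' p'] q p' pp' by simp
  have d4: "0 \<le> D q q'" using D_spokes(1)[of q q' q'] q q' pp' by simp
  have d5: "lm \<le> D q q'" using D_spokes(2)[of q q' q'] q q' pp' by simp
  have d6: "lm \<le> D p q" using D_spokes(2)[of p q q] p q pp' by simp
  have d2: "D p q' = D p q + D q q'" using D_spokes(3)[of p q q'] p q q' pp' by simp
  have t1: "0 \<le> A1*A2*D p p'" using nn3 A1 A2 d1 by simp
  have t3: "0 \<le> B1*A2*D q p'" using nn3 B1 A2 d3 by simp
  have t4: "0 \<le> B1*B2*D q q'" using nn3 B1 B2 d4 by simp
  have t2: "D p q' \<le> A1*B2*D p q'" using low1[OF A1 B2] d2 d4 d6 lmp by simp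
  have "2 * lm \<le> lm * lm * D x y" using E t1 t2 t3 t4 d2 d5 d6 by linarith
  hence "lm * 2 \<le> lm * (lm * D x y)" by (simp add: algebra_simps)
  hence "2 \<le> lm * D x y" using lmp by simp
  hence "1 < D x y"
  proof -
    assume h: "2 \<le> lm * D x y"
    show "1 < D x y"
    proof (rule ccontr)
      assume "\<not> 1 < D x y"
      hence "D x y \<le> 1" by simp
      moreover have "0 \<le> D x y" using h lmp by (smt (verit) mult_nonneg_nonpos)
      ultimately have "lm * D x y \<le> lm * 1" using lmp by (intro mult_left_mono) auto
      thus False using h lm2 by simp
    qed
  qed
  thus ?thesis by simp
qed

lemma D_char: "x + 2 \<le> y \<Longrightarrow> D x y = 1 \<longleftrightarrow> (x,y) \<in> L"
  using D_main[of x y] good_all good_D by fastforce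

end


context frz begin

definition W :: "int \<Rightarrow> int \<Rightarrow> (int \<times> int) set" where
  "W a b = {ce \<in> L. a \<le> fst ce \<and> snd ce \<le> b}"

lemma W_fin: "finite (W a b)"
  by (rule finite_subset[of _ "{a..b} \<times> {a..b}"]) (auto simp: W_def dest: L_lt)

lemma W_adj: "W a (a+1) = {}"
proof (rule ccontr)
  assume "W a (a+1) \<noteq> {}"
  then obtain c e where ce: "(c,e) \<in> L" "a \<le> c" "e \<le> a + 1" unfolding W_def by auto
  thus False using L_len[OF ce(1)] by simp
qed

lemma region_count:
  assumes ss: "sorted_wrt (<) zs" and len: "length zs = Suc N" and N1: "1 \<le> N"
  and st: "set zs = vis X (zs!0) (zs!N)" and XL: "X \<subseteq> L"
  and gX: "\<And>k. k < N \<Longrightarrow> W (zs!k) (zs!Suc k) \<subseteq> X"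
  and gaps: "\<And>k. k < N \<Longrightarrow> zs!(Suc k) = zs!k + 1 \<or> zs!(Suc k) - zs!k = 1 + int m * int (card (W (zs!k) (zs!Suc k)))"
  shows "zs!N - zs!0 = int N + int m * int (card {ce \<in> X. zs!0 \<le> fst ce \<and> snd ce \<le> zs!N})"
proof -
  let ?a = "zs!0" and ?b = "zs!N"
  let ?W' = "{ce \<in> X. ?a \<le> fst ce \<and> snd ce \<le> ?b}"
  let ?G = "\<lambda>k. W (zs!k) (zs!Suc k)"
  have l2: "2 \<le> length zs" using len N1 by simp
  have U: "?W' = (\<Union>k\<in>{..<N}. ?G k)"
  proof (intro set_eqI iffI)
    fix ce assume h: "ce \<in> ?W'"
    obtain c e where ce: "ce = (c,e)" by (cases ce)
    have cX: "(c,e) \<in> X" "?a \<le> c" "e \<le> ?b" using h ce by auto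
    have cL: "(c,e) \<in> L" using cX XL by blast
    have celt: "c < e" using L_lt[OF cL] .
    have cb: "c < zs!(length zs - 1)" using cX celt len by simp
    obtain k where k: "Suc k < length zs" "zs!k \<le> c" "c < zs!(Suc k)" using ss_locate[OF ss l2 cX(2) cb] by blast
    have ek: "e \<le> zs!Suc k"
    proof (rule ccontr)
      assume "\<not> e \<le> zs!Suc k"
      moreover have "zs!Suc k \<in> vis X ?a ?b" using st k(1) nth_mem by metis
      ultimately show False using vis_H1[of "zs!Suc k" X ?a ?b c e] cX k by simp
    qed
    have "ce \<in> ?G k" unfolding W_def using ce cL k ek by simp
    moreover have "k \<in> {..<N}" using k len by simp
    ultimately show "ce \<in> (\<Union>k\<in>{..<N}. ?G k)" by blast
  next
    fix ce assume "ce \<in> (\<Union>k\<in>{..<N}. ?G k)"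
    then obtain k where k: "k < N" "ce \<in> ?G k" by blast
    have "ce \<in> X" using gX[OF k(1)] k(2) by blast
    moreover have "?a \<le> zs!k" using ss_mono_le[OF ss, of 0 k] k len by simp
    moreover have "zs!Suc k \<le> ?b" using ss_mono_le[OF ss, of "Suc k" N] k len by simp
    ultimately show "ce \<in> ?W'" using k(2) unfolding W_def by auto
  qed
  have disj: "\<forall>i\<in>{..<N}. \<forall>j\<in>{..<N}. i \<noteq> j \<longrightarrow> ?G i \<inter> ?G j = {}"
  proof (intro ballI impI)
    fix i j assume ij: "i \<in> {..<N}" "j \<in> {..<N}" "i \<noteq> j"
    show "?G i \<inter> ?G j = {}"
    proof (rule ccontr)
      assume "?G i \<inter> ?G j \<noteq> {}"
      then obtain c e where ce: "(c,e) \<in> ?G i" "(c,e) \<in> ?G j" by auto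
      have cL: "(c,e) \<in> L" using ce unfolding W_def by simp
      have ce_lt: "c < e" using L_lt[OF cL] .
      have i1: "zs!i \<le> c" "e \<le> zs!Suc i" using ce unfolding W_def by simp_all
      have j1: "zs!j \<le> c" "e \<le> zs!Suc j" using ce unfolding W_def by simp_all
      show False
      proof (cases "i < j")
        case True
        hence "zs!Suc i \<le> zs!j" using ss_mono_le[OF ss, of "Suc i" j] ij len by simp
        thus False using i1 j1 ce_lt by simp
      next
        case False
        hence "j < i" using ij by simp
        hence "zs!Suc j \<le> zs!i" using ss_mono_le[OF ss, of "Suc j" i] ij len by simp
        thus False using i1 j1 ce_lt by simp
      qed
    qed
  qed
  have cardW: "card ?W' = (\<Sum>k<N. card (?G k))"
    unfolding U by (rule card_UN_disjoint) (simp_all add: W_fin disj)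
  have gap': "\<And>k. k < N \<Longrightarrow> zs!(Suc k) - zs!k = 1 + int m * int (card (?G k))"
  proof -
    fix k assume k: "k < N"
    show "zs!(Suc k) - zs!k = 1 + int m * int (card (?G k))"
    proof (cases "zs!(Suc k) = zs!k + 1")
      case True thus ?thesis using W_adj[of "zs!k"] by simp
    next
      case False thus ?thesis using gaps[OF k] by simp
    qed
  qed
  have "?b - ?a = (\<Sum>k<N. zs!(Suc k) - zs!k)" by (rule sum_lessThan_telescope[symmetric])
  also have "\<dots> = (\<Sum>k<N. 1 + int m * int (card (?G k)))" using gap' by simp
  also have "\<dots> = int N + int m * (\<Sum>k<N. int (card (?G k)))" by (simp add: sum.distrib sum_distrib_left)
  also have "\<dots> = int N + int m * int (card ?W')" unfolding cardW by simp
  finally show ?thesis .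
qed

lemma arc_count: "(a,b) \<in> L \<Longrightarrow> b - a = 1 + int m * int (card (W a b))"
proof (induction "nat (b - a)" arbitrary: a b rule: less_induct)
  case less
  note ab = less.prems
  note F = zsA_facts[OF ab]
  let ?zs = "zsA a b"
  have len: "length ?zs = Suc (m+1)" using F by simp
  have N1: "1 \<le> m + 1" by simp
  have st: "set ?zs = vis (L - {(a,b)}) (?zs!0) (?zs!(m+1))" using F unfolding VA_def by simp
  have XL: "L - {(a,b)} \<subseteq> L" by blast
  have gX: "\<And>k. k < m + 1 \<Longrightarrow> W (?zs!k) (?zs!Suc k) \<subseteq> L - {(a,b)}"
  proof
    fix k ce assume k: "k < m + 1" and ce: "ce \<in> W (?zs!k) (?zs!Suc k)"
    have "ce \<in> L" using ce unfolding W_def by simp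
    moreover have "ce \<noteq> (a,b)"
    proof
      assume "ce = (a,b)"
      hence h: "?zs!k \<le> a" "b \<le> ?zs!Suc k" using ce unfolding W_def by simp_all
      show False
      proof (cases k)
        case 0
        have "?zs!1 < ?zs!(m+1)" using ss_mono[OF F(1), of 1 "m+1"] F m_pos by simp
        thus False using h 0 F by simp
      next
        case (Suc j)
        have "?zs!0 < ?zs!k" using ss_mono[OF F(1), of 0 k] F k Suc by simp
        thus False using h F by simp
      qed
    qed
    ultimately show "ce \<in> L - {(a,b)}" by simp
  qed
  have gaps: "\<And>k. k < m + 1 \<Longrightarrow> ?zs!(Suc k) = ?zs!k + 1 \<or> ?zs!(Suc k) - ?zs!k = 1 + int m * int (card (W (?zs!k) (?zs!Suc k)))"
  proof -
    fix k assume k: "k < m + 1"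
    have c: "?zs!(Suc k) = ?zs!k + 1 \<or> ((?zs!k, ?zs!(Suc k)) \<in> L \<and> (?zs!k, ?zs!(Suc k)) \<noteq> (a,b))"
      using consA[OF ab, of k] k by simp
    show "?zs!(Suc k) = ?zs!k + 1 \<or> ?zs!(Suc k) - ?zs!k = 1 + int m * int (card (W (?zs!k) (?zs!Suc k)))"
    proof (cases "?zs!(Suc k) = ?zs!k + 1")
      case False
      hence h: "(?zs!k, ?zs!(Suc k)) \<in> L" "(?zs!k, ?zs!(Suc k)) \<noteq> (a,b)" using c by simp_all
      have a1: "a \<le> ?zs!k" using ss_mono_le[OF F(1), of 0 k] F k by simp
      have b1: "?zs!(Suc k) \<le> b" using ss_mono_le[OF F(1), of "Suc k" "m+1"] F k by simp
      have lt1: "?zs!k < ?zs!(Suc k)" using L_lt[OF h(1)] .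
      have "nat (?zs!(Suc k) - ?zs!k) < nat (b - a)" using a1 b1 lt1 h(2) by auto
      thus ?thesis using less.hyps h(1) by blast
    qed simp
  qed
  have R: "?zs!(m+1) - ?zs!0 = int (m+1) + int m * int (card {ce \<in> L - {(a,b)}. ?zs!0 \<le> fst ce \<and> snd ce \<le> ?zs!(m+1)})"
    using region_count[OF F(1) len N1 st XL gX gaps] .
  have E: "{ce \<in> L - {(a,b)}. a \<le> fst ce \<and> snd ce \<le> b} = W a b - {(a,b)}" unfolding W_def by auto
  have inW: "(a,b) \<in> W a b" unfolding W_def using ab by simp
  have "card (W a b - {(a,b)}) = card (W a b) - 1" using inW W_fin by simp
  moreover have "card (W a b) \<ge> 1" using inW W_fin by (metis One_nat_def Suc_leI card_gt_0_iff empty_iff)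
  ultimately have cw: "int (card (W a b)) = int (card (W a b - {(a,b)})) + 1" by simp
  have mm: "int m * int (card (W a b)) = int m * int (card (W a b - {(a,b)})) + int m"
    unfolding cw by (simp add: algebra_simps)
  have R': "b - a = int (m+1) + int m * int (card (W a b - {(a,b)}))" using R E F by simp
  show ?case using R' mm by simp
qed

lemma seg_count: assumes pq: "consec p q" shows "q - p = int m + int m * int (card (W p q))"
proof -
  note F = zsS_facts[OF pq]
  let ?zs = "zsS p q"
  have len: "length ?zs = Suc m" using F by simp
  have N1: "1 \<le> m" using m_pos by simp
  have st: "set ?zs = vis L (?zs!0) (?zs!m)" using F unfolding VS_def by simp
  have gX: "\<And>k. k < m \<Longrightarrow> W (?zs!k) (?zs!Suc k) \<subseteq> L" unfolding W_def by auto
  have gaps: "\<And>k. k < m \<Longrightarrow> ?zs!(Suc k) = ?zs!k + 1 \<or> ?zs!(Suc k) - ?zs!k = 1 + int m * int (card (W (?zs!k) (?zs!Suc k)))"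
    using consS[OF pq] arc_count by fastforce
  have R: "?zs!m - ?zs!0 = int m + int m * int (card {ce \<in> L. ?zs!0 \<le> fst ce \<and> snd ce \<le> ?zs!m})"
    using region_count[OF F(1) len N1 st _ gX gaps] by simp
  thus ?thesis using F unfolding W_def by simp
qed

lemma spoke_count:
  assumes "p \<in> P" "p' \<in> P" "p \<le> p'"
  shows "p' - p = int m * (int (card {r\<in>P. p \<le> r \<and> r < p'}) + int (card (W p p')))"
  using assms
proof (induction "nat (p' - p)" arbitrary: p rule: less_induct)
  case less
  show ?case
  proof (cases "p = p'")
    case True
    have "W p p = {}" unfolding W_def using L_lt by fastforce
    moreover have "{r\<in>P. p \<le> r \<and> r < p} = {}" by auto
    ultimately show ?thesis using True by simp
  next
    case False
    define q where "q = nxt p"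
    have pq: "consec p q" unfolding q_def using nxt_consec less.prems(1) .
    have pq1: "p < q" "q \<in> P" "\<forall>r\<in>P. \<not>(p < r \<and> r < q)" using pq unfolding consec_def by simp_all
    have qp': "q \<le> p'"
    proof (rule ccontr)
      assume "\<not> q \<le> p'"
      hence a: "p' < q" by simp
      have b: "p < p'" using less.prems(3) False by simp
      thus False using a b less.prems(2) pq1(3) by blast
    qed
    have lt: "nat (p' - q) < nat (p' - p)" using pq1 qp' by simp
    have IH: "p' - q = int m * (int (card {r\<in>P. q \<le> r \<and> r < p'}) + int (card (W q p')))"
      using less.hyps[OF lt pq1(2) less.prems(2) qp'] .
    have S1: "{r\<in>P. p \<le> r \<and> r < p'} = insert p {r\<in>P. q \<le> r \<and> r < p'}"
    proof (intro set_eqI iffI)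
      fix r assume r: "r \<in> {r\<in>P. p \<le> r \<and> r < p'}"
      show "r \<in> insert p {r\<in>P. q \<le> r \<and> r < p'}"
      proof (cases "r = p")
        case False
        hence "p < r" using r by simp
        hence "q \<le> r" using pq1(3) r by force
        thus ?thesis using r by simp
      qed simp
    next
      fix r assume "r \<in> insert p {r\<in>P. q \<le> r \<and> r < p'}"
      thus "r \<in> {r\<in>P. p \<le> r \<and> r < p'}" using less.prems pq1 False by auto
    qed
    have finS: "finite {r\<in>P. q \<le> r \<and> r < p'}" by (rule finite_subset[of _ "{q..<p'}"]) auto
    have c1: "card {r\<in>P. p \<le> r \<and> r < p'} = Suc (card {r\<in>P. q \<le> r \<and> r < p'})"
      unfolding S1 using finS pq1 by simp
    have S2: "W p p' = W p q \<union> W q p'"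
    proof (intro set_eqI iffI)
      fix ce assume h: "ce \<in> W p p'"
      obtain c e where ce: "ce = (c,e)" by (cases ce)
      have cL: "(c,e) \<in> L" "p \<le> c" "e \<le> p'" using h ce unfolding W_def by auto
      have "\<not> (c < q \<and> q < e)" using nc2[OF cL(1) pq1(2)] by simp
      hence "e \<le> q \<or> q \<le> c" by linarith
      thus "ce \<in> W p q \<union> W q p'" using cL ce qp' unfolding W_def by auto
    next
      fix ce assume "ce \<in> W p q \<union> W q p'"
      thus "ce \<in> W p p'" using pq1 qp' unfolding W_def by auto
    qed
    have D2: "W p q \<inter> W q p' = {}"
    proof (rule ccontr)
      assume "W p q \<inter> W q p' \<noteq> {}"
      then obtain c e where "(c,e) \<in> W p q" "(c,e) \<in> W q p'" by auto
      hence "(c,e) \<in> L" "e \<le> q" "q \<le> c" unfolding W_def by auto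
      thus False using L_lt by fastforce
    qed
    have c2: "card (W p p') = card (W p q) + card (W q p')"
      unfolding S2 using D2 W_fin by (simp add: card_Un_disjoint)
    have "p' - p = (q - p) + (p' - q)" by simp
    also have "\<dots> = int m + int m * int (card (W p q)) + int m * (int (card {r\<in>P. q \<le> r \<and> r < p'}) + int (card (W q p')))"
      using seg_count[OF pq] IH by simp
    also have "\<dots> = int m * (int (card {r\<in>P. p \<le> r \<and> r < p'}) + int (card (W p p')))"
      unfolding c1 c2 by (simp add: algebra_simps)
    finally show ?thesis .
  qed
qed

lemma period_count:
  assumes "p \<in> P"
  shows "int n = int m * (int (card {r\<in>P. p \<le> r \<and> r < p + int n}) + int (card (W p (p + int n))))"
proof -
  have "p + 1 * int n \<in> P" using P_per[OF assms] .
  hence "p + int n \<in> P" by simp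
  thus ?thesis using spoke_count[OF assms, of "p + int n"] by simp
qed

end


fun vf :: "(int \<Rightarrow> real) \<Rightarrow> nat \<Rightarrow> complex \<times> complex" where
  "vf a 0 = (1, \<i>)"
| "vf a (Suc k) = (snd (vf a k), of_real (a (int k + 1)) * snd (vf a k) - fst (vf a k))"

fun vb :: "(int \<Rightarrow> real) \<Rightarrow> nat \<Rightarrow> complex \<times> complex" where
  "vb a 0 = (1, \<i>)"
| "vb a (Suc k) = (of_real (a (- int k)) * fst (vb a k) - snd (vb a k), fst (vb a k))"

definition vv :: "(int \<Rightarrow> real) \<Rightarrow> int \<Rightarrow> complex" where
  "vv a x = (if 0 \<le> x then fst (vf a (nat x)) else fst (vb a (nat (- x))))"

lemma vv_nat: "vv a (int k) = fst (vf a k)" unfolding vv_def by simp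
lemma vv_neg: "vv a (- int (Suc k)) = fst (vb a (Suc k))"
proof -
  have h: "\<not> (0 \<le> - int (Suc k))" by simp
  have h2: "nat (- (- int (Suc k))) = Suc k" by simp
  show ?thesis unfolding vv_def using h h2 by (simp del: vb.simps of_nat_Suc)
qed
lemma vv_0: "vv a 0 = 1" unfolding vv_def by simp

lemma vv_rec: "vv a (x+1) + vv a (x-1) = of_real (a x) * vv a x"
proof (cases "1 \<le> x")
  case True
  define k where "k = nat (x - 1)"
  have x: "x = int k + 1" unfolding k_def using True by simp
  have e1: "vv a (x+1) = fst (vf a (Suc (Suc k)))" using vv_nat[of a "Suc (Suc k)"] x by (simp add: add.commute)
  have e2: "vv a (x-1) = fst (vf a k)" using vv_nat[of a k] x by simp
  have e3: "vv a x = fst (vf a (Suc k))" using vv_nat[of a "Suc k"] x by (simp add: add.commute)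
  show ?thesis unfolding e1 e2 e3 using x by simp
next
  case False
  show ?thesis
  proof (cases "x = 0")
    case True
    have "vv a 1 = \<i>" using vv_nat[of a 1] by simp
    moreover have "vv a (-1) = of_real (a 0) - \<i>" using vv_neg[of a 0] by simp
    ultimately show ?thesis using True vv_0 by simp
  next
    case False2: False
    define k where "k = nat (- x - 1)"
    have x: "x = - int (Suc k)" unfolding k_def using False False2 by simp
    have h1: "x - 1 = - int (Suc (Suc k))" using x by simp
    have e1: "vv a (x - 1) = fst (vb a (Suc (Suc k)))"
      using arg_cong[OF h1, of "vv a"] vv_neg[of a "Suc k"] by (simp only:)
    have e3: "vv a x = fst (vb a (Suc k))" using arg_cong[OF x, of "vv a"] vv_neg[of a k] by (simp only:)
    have e2: "vv a (x + 1) = fst (vb a k)"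
    proof (cases k)
      case 0
      have "x + 1 = 0" using x 0 by simp
      thus ?thesis using vv_0 0 by simp
    next
      case (Suc j)
      have "x + 1 = - int (Suc j)" using x Suc by simp
      thus ?thesis using vv_neg[of a j] Suc by (simp only:)
    qed
    have "fst (vb a (Suc (Suc k))) = of_real (a x) * fst (vb a (Suc k)) - fst (vb a k)"
      by (simp only: vb.simps fst_conv snd_conv x)
    thus ?thesis unfolding e1 e2 e3 by simp
  qed
qed

lemma vv_det: "det (vv a x) (vv a (x+1)) = 1"
proof -
  have step: "\<And>y. det (vv a y) (vv a (y+1)) = det (vv a (y-1)) (vv a y)"
  proof -
    fix y
    have "vv a (y+1) = of_real (a y) * vv a y - vv a (y-1)" using vv_rec[of a y] by (simp add: algebra_simps)
    hence "det (vv a y) (vv a (y+1)) = - det (vv a y) (vv a (y-1))" by simp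
    also have "\<dots> = det (vv a (y-1)) (vv a y)" using det_swap[of "vv a y" "vv a (y-1)"] by simp
    finally show "det (vv a y) (vv a (y+1)) = det (vv a (y-1)) (vv a y)" .
  qed
  have base: "det (vv a 0) (vv a 1) = 1" using vv_0[of a] vv_nat[of a 1] by (simp add: det_def)
  define f where "f y = det (vv a y) (vv a (y+1))" for y
  have st: "\<And>y. f y = f (y - 1)" unfolding f_def using step by simp
  have up: "\<And>k. f (int k) = 1"
  proof -
    fix k show "f (int k) = 1"
    proof (induction k)
      case 0 thus ?case using base unfolding f_def by simp
    next
      case (Suc k)
      have "int (Suc k) - 1 = int k" by simp
      thus ?case using st[of "int (Suc k)"] Suc by simp
    qed
  qed
  have down: "\<And>k. f (- int k) = 1"
  proof -
    fix k show "f (- int k) = 1"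
    proof (induction k)
      case 0 thus ?case using base unfolding f_def by simp
    next
      case (Suc k)
      have h: "- int k - 1 = - int (Suc k)" by simp
      have "f (- int k) = f (- int k - 1)" by (rule st)
      also have "\<dots> = f (- int (Suc k))" by (rule arg_cong[OF h])
      finally show ?case using Suc.IH by simp
    qed
  qed
  have "f x = 1"
  proof (cases "0 \<le> x")
    case True thus ?thesis using up[of "nat x"] by simp
  next
    case False thus ?thesis using down[of "nat (- x)"] by simp
  qed
  thus ?thesis unfolding f_def .
qed

lemma frieze_aux_det: "frieze_aux a i t = det (vv a i) (vv a (i + int t))"
proof -
  define g where "g t = det (vv a i) (vv a (i + int t))" for t
  have g2: "\<And>t. g (Suc (Suc t)) = a (i + int t + 1) * g (Suc t) - g t"
  proof -
    fix t
    define y where "y = i + int t + 1"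
    have e1: "i + int (Suc (Suc t)) = y + 1" unfolding y_def by simp
    have e2: "i + int (Suc t) = y" unfolding y_def by simp
    have e3: "i + int t = y - 1" unfolding y_def by simp
    have r: "vv a (y+1) = of_real (a y) * vv a y - vv a (y-1)" using vv_rec[of a y] by (simp add: algebra_simps)
    show "g (Suc (Suc t)) = a (i + int t + 1) * g (Suc t) - g t"
      unfolding g_def e1 e2 e3 r y_def[symmetric] by simp
  qed
  have "frieze_aux a i t = g t \<and> frieze_aux a i (Suc t) = g (Suc t)"
  proof (induction t)
    case 0
    show ?case unfolding g_def using vv_det[of a i] by simp
  next
    case (Suc t)
    thus ?case using g2[of t] by simp
  qed
  thus ?thesis unfolding g_def by simp
qed


lemma mod_self_small: "(0::int) \<le> i \<Longrightarrow> i < N \<Longrightarrow> i mod N = i" by simp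

lemma LA_char:
  assumes ok: "\<forall>\<alpha>\<in>T. arc_ok n \<alpha>" and n: "0 < n"
  shows "(c,e) \<in> lifted_arcs n T \<longleftrightarrow> (\<exists>d. Arc (nat (c mod int n)) d \<in> T \<and> e = c + int d)"
proof
  assume "(c,e) \<in> lifted_arcs n T"
  then obtain i d k where h: "Arc i d \<in> T" "c = int i + k * int n" "e = c + int d"
    unfolding lifted_arcs_def by blast
  have "i < n" using ok h(1) by fastforce
  hence "c mod int n = int i" using h(2) by simp
  thus "\<exists>d. Arc (nat (c mod int n)) d \<in> T \<and> e = c + int d" using h by auto
next
  assume "\<exists>d. Arc (nat (c mod int n)) d \<in> T \<and> e = c + int d"
  then obtain d where h: "Arc (nat (c mod int n)) d \<in> T" "e = c + int d" by blast
  have nn: "0 \<le> c mod int n" using n by simp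
  have "c = int (nat (c mod int n)) + (c div int n) * int n" using nn by simp
  thus "(c,e) \<in> lifted_arcs n T" unfolding lifted_arcs_def using h by blast
qed

lemma LS_char:
  assumes ok: "\<forall>\<alpha>\<in>T. arc_ok n \<alpha>" and n: "0 < n"
  shows "p \<in> lifted_spokes n T \<longleftrightarrow> Spoke (nat (p mod int n)) \<in> T"
proof
  assume "p \<in> lifted_spokes n T"
  then obtain i k where h: "Spoke i \<in> T" "p = int i + k * int n"
    unfolding lifted_spokes_def by blast
  have "i < n" using ok h(1) by fastforce
  hence "p mod int n = int i" using h(2) by simp
  thus "Spoke (nat (p mod int n)) \<in> T" using h by simp
next
  assume h: "Spoke (nat (p mod int n)) \<in> T"
  have nn: "0 \<le> p mod int n" using n by simp
  have "p = int (nat (p mod int n)) + (p div int n) * int n" using nn by simp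
  thus "p \<in> lifted_spokes n T" unfolding lifted_spokes_def using h by blast
qed

lemma cnt_corners:
  assumes ok: "\<forall>\<alpha>\<in>T. arc_ok n \<alpha>" and n: "0 < n"
  shows "cnt (lifted_arcs n T) (lifted_spokes n T) x = corners n T (nat (x mod int n))"
proof -
  let ?L = "lifted_arcs n T" and ?P = "lifted_spokes n T" and ?r = "nat (x mod int n)"
  have xr: "int ?r = x mod int n" using n by simp
  have c1: "card {i. Spoke i \<in> T \<and> i = ?r} = (if x \<in> ?P then 1 else 0)"
  proof (cases "Spoke ?r \<in> T")
    case True
    hence "{i. Spoke i \<in> T \<and> i = ?r} = {?r}" by auto
    thus ?thesis using True LS_char[OF ok n, of x] by simp
  next
    case False
    hence "{i. Spoke i \<in> T \<and> i = ?r} = {}" by auto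
    thus ?thesis using False LS_char[OF ok n, of x] by simp
  qed
  let ?Dd = "{d. Arc ?r d \<in> T}"
  have c2a: "{b. (x,b) \<in> ?L} = (\<lambda>d. x + int d) ` ?Dd"
    using LA_char[OF ok n] by auto
  have c2b: "{(i, d). Arc i d \<in> T \<and> i = ?r} = (\<lambda>d. (?r, d)) ` ?Dd" by auto
  have c2: "card {b. (x,b) \<in> ?L} = card {(i, d). Arc i d \<in> T \<and> i = ?r}"
    unfolding c2a c2b by (simp add: card_image inj_on_def)
  let ?Q = "{(i, d). Arc i d \<in> T \<and> (i + d) mod n = ?r}"
  have Qi: "\<And>i d. (i,d) \<in> ?Q \<Longrightarrow> int i = (x - int d) mod int n \<and> i < n"
  proof -
    fix i d assume h: "(i,d) \<in> ?Q"
    have ar: "Arc i d \<in> T" and md: "(i + d) mod n = ?r" using h by simp_all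
    have iln: "i < n" using ok ar by fastforce
    have "int ((i + d) mod n) = x mod int n" using md xr by simp
    hence e: "(int i + int d) mod int n = x mod int n" by (simp add: zmod_int)
    have "int i = int i mod int n" using iln by simp
    also have "\<dots> = ((int i + int d) - int d) mod int n" by simp
    also have "\<dots> = ((int i + int d) mod int n - int d) mod int n" by (simp add: mod_diff_left_eq)
    also have "\<dots> = (x mod int n - int d) mod int n" using e by simp
    also have "\<dots> = (x - int d) mod int n" by (simp add: mod_diff_left_eq)
    finally show "int i = (x - int d) mod int n \<and> i < n" using iln by simp
  qed
  have c3a: "{a. (a,x) \<in> ?L} = (\<lambda>(i,d). x - int d) ` ?Q"
  proof (intro set_eqI iffI)
    fix a assume "a \<in> {a. (a,x) \<in> ?L}"
    then obtain d where h: "Arc (nat (a mod int n)) d \<in> T" "x = a + int d" using LA_char[OF ok n] by blast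
    have am: "int (nat (a mod int n)) = a mod int n" using n by simp
    have "int ((nat (a mod int n) + d) mod n) = (a mod int n + int d) mod int n" using am by (simp add: zmod_int)
    also have "\<dots> = (a + int d) mod int n" by (simp add: mod_add_left_eq)
    also have "\<dots> = int ?r" using h(2) xr by simp
    finally have "(nat (a mod int n) + d) mod n = ?r" by linarith
    hence "(nat (a mod int n), d) \<in> ?Q" using h by simp
    moreover have "a = x - int d" using h by simp
    ultimately show "a \<in> (\<lambda>(i,d). x - int d) ` ?Q" by force
  next
    fix a assume "a \<in> (\<lambda>(i,d). x - int d) ` ?Q"
    then obtain u where u: "u \<in> ?Q" "a = (\<lambda>(i,d). x - int d) u" by blast
    obtain i d where ud: "u = (i,d)" by (cases u)
    have h: "(i,d) \<in> ?Q" "a = x - int d" using u ud by simp_all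
    have "int i = a mod int n" using Qi[OF h(1)] h(2) by simp
    hence "nat (a mod int n) = i" by simp
    hence "Arc (nat (a mod int n)) d \<in> T" using h by simp
    thus "a \<in> {a. (a,x) \<in> ?L}" using LA_char[OF ok n, of a x] h(2) by simp
  qed
  have inj: "inj_on (\<lambda>(i,d). x - int d) ?Q"
  proof (rule inj_onI)
    fix u w assume u: "u \<in> ?Q" and w: "w \<in> ?Q" and e: "(\<lambda>(i,d). x - int d) u = (\<lambda>(i,d). x - int d) w"
    obtain i d where ud: "u = (i,d)" by (cases u)
    obtain i' d' where wd: "w = (i',d')" by (cases w)
    have dd: "d = d'" using e ud wd by simp
    have "int i = int i'" using Qi[of i d] Qi[of i' d'] u w ud wd dd by simp
    thus "u = w" using ud wd dd by simp
  qed
  have c3: "card {a. (a,x) \<in> ?L} = card ?Q" unfolding c3a using inj by (simp add: card_image)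
  show ?thesis unfolding cnt_def corners_def using c1 c2 c3 by simp
qed


lemma window_card:
  assumes ok: "\<forall>\<alpha>\<in>T. arc_ok n \<alpha>" and n: "0 < n"
  shows "card {ce \<in> lifted_arcs n T. k \<le> fst ce \<and> fst ce < k + int n} = card {(i,d). Arc i d \<in> T}"
proof -
  let ?A = "{ce \<in> lifted_arcs n T. k \<le> fst ce \<and> fst ce < k + int n}"
  let ?B = "{(i,d). Arc i d \<in> T}"
  define f where "f ce = (nat (fst ce mod int n), nat (snd ce - fst ce))" for ce :: "int \<times> int"
  define g where "g u = (k + (int (fst u) - k) mod int n, k + (int (fst u) - k) mod int n + int (snd u))" for u :: "nat \<times> nat"
  have np: "0 < int n" using n by simp
  have gmod: "\<And>i. i < n \<Longrightarrow> (k + (int i - k) mod int n) mod int n = int i"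
  proof -
    fix i assume "i < n"
    have "(k + (int i - k) mod int n) mod int n = (k + (int i - k)) mod int n" by (simp add: mod_add_right_eq)
    also have "\<dots> = int i" using \<open>i < n\<close> by simp
    finally show "(k + (int i - k) mod int n) mod int n = int i" .
  qed
  have "bij_betw f ?A ?B"
  proof (rule bij_betw_byWitness[where f'=g])
    show "\<forall>a\<in>?A. g (f a) = a"
    proof
      fix a assume a: "a \<in> ?A"
      obtain c e where ce: "a = (c,e)" by (cases a)
      have h: "(c,e) \<in> lifted_arcs n T" "k \<le> c" "c < k + int n" using a ce by simp_all
      obtain d where d: "Arc (nat (c mod int n)) d \<in> T" "e = c + int d" using LA_char[OF ok n] h(1) by blast
      have cm: "int (nat (c mod int n)) = c mod int n" using np by simp
      have "(c mod int n - k) mod int n = (c - k) mod int n" by (simp add: mod_diff_left_eq)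
      also have "\<dots> = c - k" using h by simp
      finally have "k + (int (nat (c mod int n)) - k) mod int n = c" using cm by simp
      thus "g (f a) = a" unfolding f_def g_def using ce d by simp
    qed
    show "\<forall>a'\<in>?B. f (g a') = a'"
    proof
      fix u assume u: "u \<in> ?B"
      obtain i d where id: "u = (i,d)" by (cases u)
      have "i < n" using ok u id by fastforce
      thus "f (g u) = u" unfolding f_def g_def using id gmod by simp
    qed
    show "f ` ?A \<subseteq> ?B"
    proof
      fix b assume "b \<in> f ` ?A"
      then obtain a where a: "a \<in> ?A" "b = f a" by blast
      obtain c e where ce: "a = (c,e)" by (cases a)
      have h: "(c,e) \<in> lifted_arcs n T" using a ce by simp
      obtain d where d: "Arc (nat (c mod int n)) d \<in> T" "e = c + int d" using LA_char[OF ok n] h by blast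
      show "b \<in> ?B" using a(2) ce d unfolding f_def by simp
    qed
    show "g ` ?B \<subseteq> ?A"
    proof
      fix b assume "b \<in> g ` ?B"
      then obtain u where u: "u \<in> ?B" "b = g u" by blast
      obtain i d where id: "u = (i,d)" by (cases u)
      have ar: "Arc i d \<in> T" using u id by simp
      have "i < n" using ok ar by fastforce
      hence gm: "nat ((k + (int i - k) mod int n) mod int n) = i" using gmod by simp
      have inL: "(k + (int i - k) mod int n, k + (int i - k) mod int n + int d) \<in> lifted_arcs n T"
        using LA_char[OF ok n] ar gm by simp
      have r1: "0 \<le> (int i - k) mod int n" "(int i - k) mod int n < int n" using np by simp_all
      show "b \<in> ?A" using u(2) id inL r1 unfolding g_def by simp
    qed
  qed
  thus ?thesis by (rule bij_betw_same_card)
qed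

lemma spoke_card:
  assumes ok: "\<forall>\<alpha>\<in>T. arc_ok n \<alpha>" and n: "0 < n"
  shows "card {r \<in> lifted_spokes n T. k \<le> r \<and> r < k + int n} = card {i. Spoke i \<in> T}"
proof -
  let ?A = "{r \<in> lifted_spokes n T. k \<le> r \<and> r < k + int n}"
  let ?B = "{i. Spoke i \<in> T}"
  define f where "f r = nat (r mod int n)" for r :: int
  define g where "g i = k + (int i - k) mod int n" for i :: nat
  have np: "0 < int n" using n by simp
  have gmod: "\<And>i. i < n \<Longrightarrow> (k + (int i - k) mod int n) mod int n = int i"
  proof -
    fix i assume "i < n"
    have "(k + (int i - k) mod int n) mod int n = (k + (int i - k)) mod int n" by (simp add: mod_add_right_eq)
    also have "\<dots> = int i" using \<open>i < n\<close> by simp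
    finally show "(k + (int i - k) mod int n) mod int n = int i" .
  qed
  have "bij_betw f ?A ?B"
  proof (rule bij_betw_byWitness[where f'=g])
    show "\<forall>a\<in>?A. g (f a) = a"
    proof
      fix c assume h: "c \<in> ?A"
      have cm: "int (nat (c mod int n)) = c mod int n" using np by simp
      have "(c mod int n - k) mod int n = (c - k) mod int n" by (simp add: mod_diff_left_eq)
      also have "\<dots> = c - k" using h by simp
      finally show "g (f c) = c" unfolding f_def g_def using cm by simp
    qed
    show "\<forall>a'\<in>?B. f (g a') = a'"
    proof
      fix i assume u: "i \<in> ?B"
      have "i < n" using ok u by fastforce
      thus "f (g i) = i" unfolding f_def g_def using gmod by simp
    qed
    show "f ` ?A \<subseteq> ?B" unfolding f_def using LS_char[OF ok n] by auto
    show "g ` ?B \<subseteq> ?A"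
    proof
      fix b assume "b \<in> g ` ?B"
      then obtain i where u: "Spoke i \<in> T" "b = g i" by blast
      have "i < n" using ok u by fastforce
      hence gm: "nat ((k + (int i - k) mod int n) mod int n) = i" using gmod by simp
      have inP: "k + (int i - k) mod int n \<in> lifted_spokes n T" using LS_char[OF ok n] u gm by simp
      have r1: "0 \<le> (int i - k) mod int n" "(int i - k) mod int n < int n" using np by simp_all
      show "b \<in> ?A" using u(2) inP r1 unfolding g_def by simp
    qed
  qed
  thus ?thesis by (rule bij_betw_same_card)
qed

lemma frz_inst:
  assumes m: "0 < m" and n: "0 < n" and ang: "angulation m n T" and sp: "1 \<le> num_spokes T"
  shows "frz m n (lifted_arcs n T) (lifted_spokes n T) (vv (frieze_a m n T))"
proof -
  let ?L = "lifted_arcs n T" and ?P = "lifted_spokes n T" and ?v = "vv (frieze_a m n T)"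
  have ok: "\<forall>\<alpha>\<in>T. arc_ok n \<alpha>" using ang unfolding angulation_def by simp
  have nc: "noncrossing n T" using ang unfolding angulation_def by simp
  have A3: "\<forall>(a, b) \<in> ?L. card (below_vertices ?L a b) = m + 2" using ang unfolding angulation_def by simp
  have A4: "\<forall>p \<in> ?P. \<forall>q \<in> ?P. p < q \<and> (\<forall>r \<in> ?P. \<not> (p < r \<and> r < q)) \<longrightarrow>
        card (between_vertices ?L p q) + 1 = m + 2" using ang unfolding angulation_def by simp
  show ?thesis
  proof (rule frz.intro)
    show "0 < m" using m .
    show "0 < n" using n .
    show "\<And>a b. (a, b) \<in> ?L \<Longrightarrow> a + 2 \<le> b \<and> b \<le> a + int n"
    proof -
      fix a b assume "(a,b) \<in> ?L"
      then obtain i d k where h: "Arc i d \<in> T" "a = int i + k * int n" "b = a + int d"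
        unfolding lifted_arcs_def by blast
      have "2 \<le> d" "d \<le> n" using ok h(1) by fastforce+
      thus "a + 2 \<le> b \<and> b \<le> a + int n" using h by simp
    qed
    show "\<And>p k. p \<in> ?P \<Longrightarrow> p + k * int n \<in> ?P"
    proof -
      fix p k assume "p \<in> ?P"
      then obtain i k' where h: "Spoke i \<in> T" "p = int i + k' * int n" unfolding lifted_spokes_def by blast
      have "p + k * int n = int i + (k' + k) * int n" using h by (simp add: algebra_simps)
      thus "p + k * int n \<in> ?P" unfolding lifted_spokes_def using h by blast
    qed
    show "?P \<noteq> {}"
    proof -
      have "{i. Spoke i \<in> T} \<noteq> {}" using sp unfolding num_spokes_def by (metis card.empty not_one_le_zero)
      then obtain i where "Spoke i \<in> T" by blast
      hence "int i + 0 * int n \<in> ?P" unfolding lifted_spokes_def by blast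
      thus ?thesis by blast
    qed
    show "\<And>a b c e. (a, b) \<in> ?L \<Longrightarrow> (c, e) \<in> ?L \<Longrightarrow> \<not> (a < c \<and> c < b \<and> b < e)"
      using nc unfolding noncrossing_def by blast
    show "\<And>a b p. (a, b) \<in> ?L \<Longrightarrow> p \<in> ?P \<Longrightarrow> \<not> (a < p \<and> p < b)"
      using nc unfolding noncrossing_def by blast
    show "\<And>a b. (a, b) \<in> ?L \<Longrightarrow> card (vis (?L - {(a, b)}) a b) = m + 2"
      using A3 below_vis by fastforce
    show "\<And>p q. p \<in> ?P \<Longrightarrow> q \<in> ?P \<Longrightarrow> p < q \<Longrightarrow> (\<forall>r\<in>?P. \<not> (p < r \<and> r < q)) \<Longrightarrow> card (vis ?L p q) = m + 1"
    proof -
      fix p q assume "p \<in> ?P" "q \<in> ?P" "p < q" "\<forall>r\<in>?P. \<not> (p < r \<and> r < q)"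
      hence "card (between_vertices ?L p q) + 1 = m + 2" using A4 by blast
      thus "card (vis ?L p q) = m + 1" using between_vis by simp
    qed
    show "\<And>x. ?v (x + 1) + ?v (x - 1) = of_real (real (cnt ?L ?P x) * lam m) * ?v x"
      using vv_rec cnt_corners[OF ok n] unfolding frieze_a_def by simp
    show "\<And>x. det (?v x) (?v (x + 1)) = 1" using vv_det by simp
  qed
qed


theorem proposition4p23:
  fixes m n s :: nat and T :: "parc set" and k :: int
  assumes "0 < m" and "0 < n" and "m dvd n"
    and "1 \<le> s" and "s \<le> n div m"
    and "angulation m n T" and "num_spokes T = s"
  shows "finite {(i, j). k \<le> i \<and> i \<le> k + int n - 1 \<and> i + 2 \<le> j \<and> frieze m n T i j = 1}
       \<and> card {(i, j). k \<le> i \<and> i \<le> k + int n - 1 \<and> i + 2 \<le> j \<and> frieze m n T i j = 1}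
           = n div m - s"
proof -
  let ?L = "lifted_arcs n T" and ?P = "lifted_spokes n T" and ?v = "vv (frieze_a m n T)"
  have ok: "\<forall>\<alpha>\<in>T. arc_ok n \<alpha>" using assms(6) unfolding angulation_def by simp
  have sp: "1 \<le> num_spokes T" using assms(4,7) by simp
  interpret F: frz m n ?L ?P ?v using frz_inst[OF assms(1) assms(2) assms(6) sp] .
  have FR: "\<And>i j. i \<le> j \<Longrightarrow> frieze m n T i j = F.D i j"
  proof -
    fix i j :: int assume "i \<le> j"
    hence "i + int (nat (j - i)) = j" by simp
    thus "frieze m n T i j = F.D i j" unfolding frieze_def F.D_def using frieze_aux_det by simp
  qed
  define S where "S = {(i, j). k \<le> i \<and> i \<le> k + int n - 1 \<and> i + 2 \<le> j \<and> frieze m n T i j = 1}"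
  have SW: "S = {ce \<in> ?L. k \<le> fst ce \<and> fst ce < k + int n}"
  proof (intro set_eqI iffI)
    fix ce assume "ce \<in> S"
    then obtain i j where ij: "ce = (i,j)" "k \<le> i" "i \<le> k + int n - 1" "i + 2 \<le> j" "frieze m n T i j = 1"
      unfolding S_def by blast
    have "F.D i j = 1" using ij FR[of i j] by simp
    hence "(i,j) \<in> ?L" using F.D_char[OF ij(4)] by simp
    thus "ce \<in> {ce \<in> ?L. k \<le> fst ce \<and> fst ce < k + int n}" using ij by simp
  next
    fix ce assume h: "ce \<in> {ce \<in> ?L. k \<le> fst ce \<and> fst ce < k + int n}"
    obtain i j where ij: "ce = (i,j)" by (cases ce)
    have L: "(i,j) \<in> ?L" "k \<le> i" "i < k + int n" using h ij by simp_all
    have ij2: "i + 2 \<le> j" using F.L_len[OF L(1)] by simp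
    have "F.D i j = 1" using F.D_char[OF ij2] L(1) by simp
    hence "frieze m n T i j = 1" using FR[of i j] ij2 by simp
    thus "ce \<in> S" unfolding S_def using ij L ij2 by simp
  qed
  have finS: "finite S"
  proof -
    have "S \<subseteq> {k..k + int n} \<times> {k..k + 2 * int n}"
    proof
      fix ce assume "ce \<in> S"
      hence h: "ce \<in> ?L" "k \<le> fst ce" "fst ce < k + int n" using SW by simp_all
      obtain i j where ij: "ce = (i,j)" by (cases ce)
      have "i + 2 \<le> j \<and> j \<le> i + int n" using F.L_len h(1) ij by simp
      thus "ce \<in> {k..k + int n} \<times> {k..k + 2 * int n}" using h ij by simp
    qed
    thus ?thesis by (rule finite_subset) simp
  qed
  let ?A = "card {(i,d). Arc i d \<in> T}"
  have cS: "card S = ?A" unfolding SW using window_card[OF ok assms(2)] .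
  obtain p where p: "p \<in> ?P" using F.P_ne by blast
  have per: "int n = int m * (int (card {r\<in>?P. p \<le> r \<and> r < p + int n}) + int (card (F.W p (p + int n))))"
    using F.period_count[OF p] .
  have c1: "card {r\<in>?P. p \<le> r \<and> r < p + int n} = s"
    using spoke_card[OF ok assms(2), of p] assms(7) unfolding num_spokes_def by simp
  have pn: "p + int n \<in> ?P" using F.P_per[OF p, of 1] by simp
  have WW: "F.W p (p + int n) = {ce \<in> ?L. p \<le> fst ce \<and> fst ce < p + int n}"
  proof (intro set_eqI iffI)
    fix ce assume h: "ce \<in> F.W p (p + int n)"
    obtain c e where ce: "ce = (c,e)" by (cases ce)
    have h2: "(c,e) \<in> ?L" "p \<le> c" "e \<le> p + int n" using h ce unfolding F.W_def by simp_all
    have "c < e" using F.L_lt[OF h2(1)] .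
    thus "ce \<in> {ce \<in> ?L. p \<le> fst ce \<and> fst ce < p + int n}" using h2 ce by simp
  next
    fix ce assume h: "ce \<in> {ce \<in> ?L. p \<le> fst ce \<and> fst ce < p + int n}"
    obtain c e where ce: "ce = (c,e)" by (cases ce)
    have h2: "(c,e) \<in> ?L" "p \<le> c" "c < p + int n" using h ce by simp_all
    have "\<not> (c < p + int n \<and> p + int n < e)" using F.nc2[OF h2(1) pn] .
    hence "e \<le> p + int n" using h2 by simp
    thus "ce \<in> F.W p (p + int n)" unfolding F.W_def using h2 ce by simp
  qed
  have c2: "card (F.W p (p + int n)) = ?A" unfolding WW using window_card[OF ok assms(2)] .
  have "int n = int m * (int s + int ?A)" using per c1 c2 by simp
  hence nn: "n = m * (s + ?A)" by (metis of_nat_add of_nat_eq_iff of_nat_mult)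
  hence "n div m = s + ?A" using assms(1) by simp
  hence "n div m - s = ?A" by simp
  thus ?thesis using finS cS unfolding S_def by simp
qed


end
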